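(* Let $n\ge 1$, $m\ge 2$ and $0\le k\le n-1$, and let $\mathcal{C}^k_{ac}$ be the class of all complete acyclic $k$-bounded CP-nets over $n$ variables of domain size $m$, over the instance space $\mathcal{X}_{swap}$. Then \[n(m-1)m^k\le n(m-1)\mathcal{U}_k\le \mathrm{TD}(\mathcal{C}^k_{ac})\le e_{max}+n(m-1)\mathcal{U}_k\le nk+n(m-1)\binom{n-1}{k}m^k.\] Moreover, $\mathrm{TD}(\mathcal{C}^0_{ac})=(m-1)n$, $\mathrm{TD}(\mathcal{C}^1_{ac})=(m-1)mn$, and $\mathrm{TD}(\mathcal{C}^{n-1}_{ac})=(m-1)nm^{n-1}$.
   Context: Variables $V=\{v_1,\dots,v_n\}$, each with a finite domain of size $m$. An outcome assigns a value to every variable; $\mathcal{O}_X$ denotes assignments to $X\subseteq V$. A CP-net specifies for each $v_i$ a parent set $Pa(v_i)\subseteq V\setminus\{v_i\}$ and, for each context $\gamma\in\mathcal{O}_{Pa(v_i)}$, either a strict total order $\succ^{v_i}_\gamma$ on $D_{v_i}$ or nothing; complete means an order is given for every variable and context; parents are non-dummy (each parent actually affects the preferences). Acyclic: the graph with edges $(v_j,v_i)$, $v_j\in Pa(v_i)$, is acyclic; $k$-bounded: all $|Pa(v_i)|\le k$. Improving flip: changing only $v_i$ to a value preferred under $\succ^{v_i}_{o[Pa(v_i)]}$; $o'\succ o$ iff a nonempty sequence of improving flips leads from $o$ to $o'$. A swap is an ordered pair $x=(x.1,x.2)$ of outcomes differing in exactly one variable; $\mathcal{X}_{swap}$ contains,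 for each unordered such pair, exactly one of its two orderings (fixed arbitrarily); a CP-net $N$ is the concept $c_N(x)=1$ iff $x.1\succ x.2$. A teaching set for $c$ in class $\mathcal{C}$ is a set of labeled examples consistent with $c$ and with no other concept of $\mathcal{C}$; $\mathrm{TD}(c,\mathcal{C})$ is the minimum size of one and $\mathrm{TD}(\mathcal{C})=\max_{c\in\mathcal{C}}\mathrm{TD}(c,\mathcal{C})$. $e_{max}=(n-k)k+\binom{k}{2}$. A set $S\subseteq\{1,\dots,m\}^{n-1}$ is $(m,n-1,k)$-universal if for every set of $k$ coordinates, the projection of $S$ onto these coordinates contains all $m^k$ vectors; $\mathcal{U}_k$ is the smallest size of an $(m,n-1,k)$-universal set. *)

theory Defs
  imports "HOL-Library.FuncSet"
begin

definition outcomes :: "nat \<Rightarrow> nat \<Rightarrow> (nat \<Rightarrow> nat) set" where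
  "outcomes n m = {w. (\<forall>i<n. w i < m) \<and> (\<forall>i\<ge>n. w i = 0)}"

definition is_swap :: "nat \<Rightarrow> nat \<Rightarrow> (nat \<Rightarrow> nat) \<times> (nat \<Rightarrow> nat) \<Rightarrow> bool" where
  "is_swap n m x \<longleftrightarrow> fst x \<in> outcomes n m \<and> snd x \<in> outcomes n m \<and>
     card {i. i < n \<and> fst x i \<noteq> snd x i} = 1"

text \<open>An instance space X_swap: for each unordered swap pair exactly one of its
  two orderings (chosen arbitrarily).\<close>
definition swap_space :: "nat \<Rightarrow> nat \<Rightarrow> ((nat \<Rightarrow> nat) \<times> (nat \<Rightarrow> nat)) set \<Rightarrow> bool" where
  "swap_space n m X \<longleftrightarrow> (\<forall>x\<in>X. is_swap n m x) \<and>
     (\<forall>a b. is_swap n m (a, b) \<longrightarrow> ((a, b) \<in> X \<longleftrightarrow> (b, a) \<notin> X))"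

text \<open>CP-net: parent sets Pa and conditional preference tables ord.
  ord i w is the strict order (pairs (a,b) meaning a preferred to b) on the
  domain of variable i in the context given by the outcome w restricted to Pa i.\<close>

definition strict_total_dom :: "nat \<Rightarrow> (nat \<times> nat) set \<Rightarrow> bool" where
  "strict_total_dom m r \<longleftrightarrow> r \<subseteq> {0..<m} \<times> {0..<m} \<and> strict_linear_order_on {0..<m} r"

definition complete_acyclic_cpnet ::
  "nat \<Rightarrow> nat \<Rightarrow> nat \<Rightarrow> (nat \<Rightarrow> nat set) \<Rightarrow> (nat \<Rightarrow> (nat \<Rightarrow> nat) \<Rightarrow> (nat \<times> nat) set) \<Rightarrow> bool"
  where
  "complete_acyclic_cpnet n m k Pa ord \<longleftrightarrow>
     (\<forall>i<n. Pa i \<subseteq> {0..<n} - {i}) \<and>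
     (\<forall>i<n. card (Pa i) \<le> k) \<and>
     acyclic {(j, i). i < n \<and> j \<in> Pa i} \<and>
     \<comment> \<open>complete: a strict total order for every variable and context\<close>
     (\<forall>i<n. \<forall>w\<in>outcomes n m. strict_total_dom m (ord i w)) \<and>
     \<comment> \<open>the order depends only on the context of the parents\<close>
     (\<forall>i<n. \<forall>w\<in>outcomes n m. \<forall>w'\<in>outcomes n m.
        (\<forall>j\<in>Pa i. w j = w' j) \<longrightarrow> ord i w = ord i w') \<and>
     \<comment> \<open>parents are non-dummy\<close>
     (\<forall>i<n. \<forall>j\<in>Pa i. \<exists>w\<in>outcomes n m. \<exists>w'\<in>outcomes n m.
        (\<forall>l. l \<noteq> j \<longrightarrow> w l = w' l) \<and> ord i w \<noteq> ord i w')"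

definition improving_flip ::
  "nat \<Rightarrow> nat \<Rightarrow> (nat \<Rightarrow> (nat \<Rightarrow> nat) \<Rightarrow> (nat \<times> nat) set) \<Rightarrow> ((nat \<Rightarrow> nat) \<times> (nat \<Rightarrow> nat)) set"
  where
  "improving_flip n m ord = {(w, w'). w \<in> outcomes n m \<and>
     (\<exists>i<n. \<exists>v<m. v \<noteq> w i \<and> w' = w(i := v) \<and> (v, w i) \<in> ord i w)}"

text \<open>w' \<succ> w iff (w, w') in the transitive closure of improving flips.
  The concept of a CP-net on the instance space X.\<close>
definition cp_concept ::
  "nat \<Rightarrow> nat \<Rightarrow> ((nat \<Rightarrow> nat) \<times> (nat \<Rightarrow> nat)) set \<Rightarrow> (nat \<Rightarrow> (nat \<Rightarrow> nat) \<Rightarrow> (nat \<times> nat) set)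
    \<Rightarrow> ((nat \<Rightarrow> nat) \<times> (nat \<Rightarrow> nat) \<Rightarrow> bool)" where
  "cp_concept n m X ord = (\<lambda>x. x \<in> X \<and> (snd x, fst x) \<in> (improving_flip n m ord)\<^sup>+)"

definition C_ac :: "nat \<Rightarrow> nat \<Rightarrow> nat \<Rightarrow> ((nat \<Rightarrow> nat) \<times> (nat \<Rightarrow> nat)) set
    \<Rightarrow> ((nat \<Rightarrow> nat) \<times> (nat \<Rightarrow> nat) \<Rightarrow> bool) set" where
  "C_ac n m k X = {cp_concept n m X ord | Pa ord. complete_acyclic_cpnet n m k Pa ord}"

definition teaching_set :: "'x set \<Rightarrow> ('x \<Rightarrow> bool) set \<Rightarrow> ('x \<Rightarrow> bool) \<Rightarrow> ('x \<times> bool) set \<Rightarrow> bool" where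
  "teaching_set X C c S \<longleftrightarrow> S \<subseteq> X \<times> UNIV \<and> (\<forall>(x, l)\<in>S. c x = l) \<and>
     (\<forall>c'\<in>C. (\<forall>(x, l)\<in>S. c' x = l) \<longrightarrow> c' = c)"

definition TD_of :: "'x set \<Rightarrow> ('x \<Rightarrow> bool) set \<Rightarrow> ('x \<Rightarrow> bool) \<Rightarrow> nat" where
  "TD_of X C c = Min {card S | S. teaching_set X C c S}"

definition TD :: "'x set \<Rightarrow> ('x \<Rightarrow> bool) set \<Rightarrow> nat" where
  "TD X C = Max ((TD_of X C) ` C)"

definition e_max :: "nat \<Rightarrow> nat \<Rightarrow> nat" where
  "e_max n k = (n - k) * k + (k choose 2)"

definition universal :: "nat \<Rightarrow> nat \<Rightarrow> nat \<Rightarrow> (nat \<Rightarrow> nat) set \<Rightarrow> bool" where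
  "universal m d k S \<longleftrightarrow> S \<subseteq> PiE {0..<d} (\<lambda>_. {1..m}) \<and>
     (\<forall>K. K \<subseteq> {0..<d} \<and> card K = k \<longrightarrow>
        (\<lambda>s. restrict s K) ` S = PiE K (\<lambda>_. {1..m}))"

definition U :: "nat \<Rightarrow> nat \<Rightarrow> nat \<Rightarrow> nat" where
  "U m n k = Min {card S | S. universal m (n - 1) k S}"

end

theory Submission
  imports Defs
begin


definition sto :: "nat \<Rightarrow> (nat \<times> nat) set \<Rightarrow> bool" where
  "sto m r \<longleftrightarrow> r \<subseteq> {0..<m} \<times> {0..<m} \<and> trans r \<and> (\<forall>a. (a,a) \<notin> r) \<and>
     (\<forall>a<m. \<forall>b<m. a \<noteq> b \<longrightarrow> (a,b) \<in> r \<or> (b,a) \<in> r)"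

lemma sto_iff: "strict_total_dom m r \<longleftrightarrow> sto m r"
  unfolding strict_total_dom_def sto_def strict_linear_order_on_def irrefl_def total_on_def
  by (simp add: Ball_def)

definition adj :: "(nat \<times> nat) set \<Rightarrow> (nat \<times> nat) set" where
  "adj r = {(a,b). (a,b) \<in> r \<and> \<not>(\<exists>c. (a,c) \<in> r \<and> (c,b) \<in> r)}"

lemma adj_sub: "adj r \<subseteq> r" unfolding adj_def by auto

lemma card_adj:
  assumes "sto m r" shows "card (adj r) \<le> m - 1"
proof (cases "m = 0")
  case True
  then have "r = {}" using assms unfolding sto_def by auto
  then show ?thesis by (simp add: adj_def)
next
  case False
  have fin: "finite r" using assms unfolding sto_def
    by (meson finite_SigmaI finite_atLeastLessThan finite_subset)
  have acy: "acyclic r" using assms unfolding sto_def acyclic_def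
    by (simp add: trancl_id)
  have "wf r" using wf_iff_acyclic_if_finite[OF fin] acy by simp
  then obtain z where z: "z \<in> {0..<m}" "\<forall>y. (y,z) \<in> r \<longrightarrow> y \<notin> {0..<m}"
    using False unfolding wf_eq_minimal by (metis atLeastLessThan_iff not_gr0 zero_le)
  have zz: "\<forall>y. (y,z) \<notin> r" using z assms unfolding sto_def by auto
  have inj: "inj_on snd (adj r)"
  proof (rule inj_onI)
    fix p q assume p: "p \<in> adj r" and q: "q \<in> adj r" and e: "snd p = snd q"
    obtain a b where pab: "p = (a,b)" by force
    obtain a' where qab: "q = (a',b)" using e pab by (cases q) auto
    have r1: "(a,b) \<in> r" "(a',b) \<in> r" using p q pab qab unfolding adj_def by auto
    have "a < m" "a' < m" using r1 assms unfolding sto_def by auto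
    show "p = q"
    proof (rule ccontr)
      assume "p \<noteq> q"
      then have "a \<noteq> a'" using pab qab by auto
      then have "(a,a') \<in> r \<or> (a',a) \<in> r" using assms \<open>a<m\<close> \<open>a'<m\<close> unfolding sto_def by auto
      then show False using p q pab qab r1 unfolding adj_def by auto
    qed
  qed
  have "snd ` adj r \<subseteq> {0..<m} - {z}"
    using zz assms unfolding adj_def sto_def by force
  then have "card (snd ` adj r) \<le> card ({0..<m} - {z})" by (simp add: card_mono)
  also have "\<dots> = m - 1" using z by simp
  finally show ?thesis using card_image[OF inj] by simp
qed

lemma adj_gen:
  assumes "sto m r" "sto m r'" "adj r \<subseteq> r'"
  shows "r' = r"
proof -
  have fin: "finite r" using assms unfolding sto_def
    by (meson finite_SigmaI finite_atLeastLessThan finite_subset)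
  have main: "\<forall>a b. (a,b) \<in> r \<longrightarrow> card {c. (a,c) \<in> r \<and> (c,b) \<in> r} = g \<longrightarrow> (a,b) \<in> r'" for g
  proof (induction g rule: less_induct)
    case (less g)
    show ?case
    proof (intro allI impI)
      fix a b assume ab: "(a,b) \<in> r" and cg: "card {c. (a,c) \<in> r \<and> (c,b) \<in> r} = g"
      show "(a,b) \<in> r'"
      proof (cases "\<exists>c. (a,c) \<in> r \<and> (c,b) \<in> r")
        case False
        then show ?thesis using ab assms(3) unfolding adj_def by auto
      next
        case True
        then obtain c where c: "(a,c) \<in> r" "(c,b) \<in> r" by auto
        have fb: "finite {c. (a,c) \<in> r \<and> (c,b) \<in> r}"
          by (rule finite_subset[of _ "snd ` r"]) (use fin in force)+
        have tr: "trans r" and irr: "\<forall>a. (a,a) \<notin> r" using assms(1) unfolding sto_def by auto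
        have s1: "{d. (a,d) \<in> r \<and> (d,c) \<in> r} \<subset> {d. (a,d) \<in> r \<and> (d,b) \<in> r}"
          using c tr irr unfolding trans_def by blast
        have s2: "{d. (c,d) \<in> r \<and> (d,b) \<in> r} \<subset> {d. (a,d) \<in> r \<and> (d,b) \<in> r}"
          using c tr irr unfolding trans_def by blast
        have "(a,c) \<in> r'" using less.IH[of "card {d. (a,d) \<in> r \<and> (d,c) \<in> r}"] psubset_card_mono[OF fb s1] cg c
          by auto
        moreover have "(c,b) \<in> r'" using less.IH[of "card {d. (c,d) \<in> r \<and> (d,b) \<in> r}"] psubset_card_mono[OF fb s2] cg c
          by auto
        ultimately show ?thesis using assms(2) unfolding sto_def trans_def by blast
      qed
    qed
  qed
  have sub: "r \<subseteq> r'" using main by auto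
  show ?thesis
  proof
    show "r' \<subseteq> r"
    proof
      fix p assume p: "p \<in> r'"
      obtain a b where pab: "p = (a,b)" by force
      have "a < m" "b < m" "a \<noteq> b" using assms(2) p pab unfolding sto_def by auto
      then have "(a,b) \<in> r \<or> (b,a) \<in> r" using assms(1) unfolding sto_def by auto
      moreover have "(b,a) \<notin> r"
      proof
        assume "(b,a) \<in> r"
        then have "(b,a) \<in> r'" using sub by auto
        then show False using p pab assms(2) unfolding sto_def trans_def by blast
      qed
      ultimately show "p \<in> r" using pab by auto
    qed
  qed (rule sub)
qed

lemma sto_eq:
  assumes "sto m r" "sto m r'" "r \<subseteq> r'" shows "r' = r"
  using adj_gen[OF assms(1,2)] adj_sub assms(3) by blast

lemma sto_trans: "sto m r \<Longrightarrow> (a,b) \<in> r \<Longrightarrow> (b,c) \<in> r \<Longrightarrow> (a,c) \<in> r"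
  unfolding sto_def by (meson transD)
lemma sto_irr: "sto m r \<Longrightarrow> (a,a) \<notin> r"
  unfolding sto_def by auto
lemma sto_tot: "sto m r \<Longrightarrow> a < m \<Longrightarrow> b < m \<Longrightarrow> a \<noteq> b \<Longrightarrow> (a,b) \<in> r \<or> (b,a) \<in> r"
  unfolding sto_def by auto
lemma sto_dom: "sto m r \<Longrightarrow> (a,b) \<in> r \<Longrightarrow> a < m \<and> b < m"
  unfolding sto_def by auto

definition ordf :: "nat \<Rightarrow> (nat \<Rightarrow> nat) \<Rightarrow> (nat \<times> nat) set" where
  "ordf m f = {(p,q). p < m \<and> q < m \<and> f q < f p}"

lemma sto_ordf: assumes "inj f" shows "sto m (ordf m f)"
proof -
  have "\<forall>a<m. \<forall>b<m. a \<noteq> b \<longrightarrow> (a,b) \<in> ordf m f \<or> (b,a) \<in> ordf m f"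
  proof (intro allI impI)
    fix a b assume "a < m" "b < m" "a \<noteq> b"
    then have "f a \<noteq> f b" using assms by (meson injD)
    then show "(a,b) \<in> ordf m f \<or> (b,a) \<in> ordf m f" using \<open>a<m\<close> \<open>b<m\<close>
      unfolding ordf_def by (auto simp: nat_neq_iff)
  qed
  moreover have "trans (ordf m f)" unfolding trans_def ordf_def by auto
  ultimately show ?thesis unfolding sto_def ordf_def by auto
qed



lemma net_pa: assumes "complete_acyclic_cpnet n m k Pa ord" "i < n" shows "Pa i \<subseteq> {0..<n} - {i}"
  using assms(1)[unfolded complete_acyclic_cpnet_def, THEN conjunct1] assms(2) by blast
lemma net_card: assumes "complete_acyclic_cpnet n m k Pa ord" "i < n" shows "card (Pa i) \<le> k"
  using assms(1)[unfolded complete_acyclic_cpnet_def, THEN conjunct2, THEN conjunct1] assms(2) by blast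
lemma net_acyc: assumes "complete_acyclic_cpnet n m k Pa ord" shows "acyclic {(j, i). i < n \<and> j \<in> Pa i}"
  using assms(1)[unfolded complete_acyclic_cpnet_def, THEN conjunct2, THEN conjunct2, THEN conjunct1] by blast
lemma net_sto: assumes "complete_acyclic_cpnet n m k Pa ord" "i < n" "w \<in> outcomes n m" shows "sto m (ord i w)"
  using assms(1)[unfolded complete_acyclic_cpnet_def, THEN conjunct2, THEN conjunct2, THEN conjunct2, THEN conjunct1] assms(2,3) sto_iff by blast
lemma net_ctx: assumes "complete_acyclic_cpnet n m k Pa ord" "i < n" "w \<in> outcomes n m"
   "w' \<in> outcomes n m" "\<And>j. j \<in> Pa i \<Longrightarrow> w j = w' j" shows "ord i w = ord i w'"
proof -
  have "\<forall>i<n. \<forall>w\<in>outcomes n m. \<forall>w'\<in>outcomes n m.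
        (\<forall>j\<in>Pa i. w j = w' j) \<longrightarrow> ord i w = ord i w'" using assms(1)[unfolded complete_acyclic_cpnet_def, THEN conjunct2, THEN conjunct2, THEN conjunct2, THEN conjunct2, THEN conjunct1] .
  then show ?thesis using assms(2-5) by blast
qed
lemma net_nd: assumes "complete_acyclic_cpnet n m k Pa ord" "i < n" "j \<in> Pa i" shows
   "\<exists>w\<in>outcomes n m. \<exists>w'\<in>outcomes n m. (\<forall>l. l \<noteq> j \<longrightarrow> w l = w' l) \<and> ord i w \<noteq> ord i w'"
proof -
  have "\<forall>i<n. \<forall>j\<in>Pa i. \<exists>w\<in>outcomes n m. \<exists>w'\<in>outcomes n m.
        (\<forall>l. l \<noteq> j \<longrightarrow> w l = w' l) \<and> ord i w \<noteq> ord i w'" using assms(1)[unfolded complete_acyclic_cpnet_def, THEN conjunct2, THEN conjunct2, THEN conjunct2, THEN conjunct2, THEN conjunct2] .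
  then show ?thesis using assms(2-3) by blast
qed
lemma net_fin: "complete_acyclic_cpnet n m k Pa ord \<Longrightarrow> i < n \<Longrightarrow> finite (Pa i)"
  using net_pa by (meson finite_Diff finite_atLeastLessThan finite_subset)

lemma out_upd: "t \<in> outcomes n m \<Longrightarrow> i < n \<Longrightarrow> a < m \<Longrightarrow> t(i := a) \<in> outcomes n m"
  unfolding outcomes_def by auto

lemma out_lt: "t \<in> outcomes n m \<Longrightarrow> i < n \<Longrightarrow> t i < m"
  unfolding outcomes_def by auto

definition flipS :: "nat \<Rightarrow> nat \<Rightarrow> (nat \<Rightarrow> (nat \<Rightarrow> nat) \<Rightarrow> (nat \<times> nat) set) \<Rightarrow> nat set \<Rightarrow> ((nat \<Rightarrow> nat) \<times> (nat \<Rightarrow> nat)) set"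
  where "flipS n m ord F = {(w, w'). w \<in> outcomes n m \<and>
     (\<exists>i\<in>F. i < n \<and> (\<exists>v<m. v \<noteq> w i \<and> w' = w(i := v) \<and> (v, w i) \<in> ord i w))}"

lemma flip_UNIV: "improving_flip n m ord = flipS n m ord {0..<n}"
  unfolding improving_flip_def flipS_def by auto

lemma trancl_split:
  assumes "(x,y) \<in> (A \<union> B)\<^sup>+"
  shows "(x,y) \<in> A\<^sup>+ \<or> (x,y) \<in> (A \<union> B)\<^sup>* O B O (A \<union> B)\<^sup>*"
  using assms
proof (induction rule: trancl_induct)
  case (base y)
  then show ?case by blast
next
  case (step y z)
  from step.IH show ?case
  proof
    assume h: "(x, y) \<in> A\<^sup>+"
    show ?thesis
    proof (cases "(y,z) \<in> A")
      case True then show ?thesis using h by auto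
    next
      case False
      then have "(y,z) \<in> B" using step by auto
      then have "(x,z) \<in> (A \<union> B)\<^sup>* O B O (A \<union> B)\<^sup>*"
        using h trancl_into_rtrancl[OF trancl_mono[OF h, of "A \<union> B"]] by blast
      then show ?thesis by blast
    qed
  next
    assume h: "(x, y) \<in> (A \<union> B)\<^sup>* O B O (A \<union> B)\<^sup>*"
    then obtain u v where "(x,u) \<in> (A \<union> B)\<^sup>*" "(u,v) \<in> B" "(v,y) \<in> (A \<union> B)\<^sup>*" by blast
    moreover have "(v,z) \<in> (A \<union> B)\<^sup>*" using calculation(3) step(2) by (meson rtrancl.rtrancl_into_rtrancl)
    ultimately show ?thesis by blast
  qed
qed

lemma flip_mono:
  assumes net: "complete_acyclic_cpnet n m k Pa ord" and j: "j < n" and dis: "Pa j \<inter> F = {}"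
    and p: "p \<in> outcomes n m" and pq: "(p,q) \<in> (flipS n m ord F)\<^sup>*"
  shows "q \<in> outcomes n m \<and> (\<forall>l\<in>Pa j. q l = p l) \<and> (q j = p j \<or> (q j, p j) \<in> ord j p)"
  using pq
proof (induction rule: rtrancl_induct)
  case base
  then show ?case using p by auto
next
  case (step q r)
  then have q: "q \<in> outcomes n m" "\<forall>l\<in>Pa j. q l = p l" "q j = p j \<or> (q j, p j) \<in> ord j p" by auto
  from step(2) obtain i v where iv: "i \<in> F" "i < n" "v < m" "v \<noteq> q i" "r = q(i := v)" "(v, q i) \<in> ord i q"
    unfolding flipS_def by auto
  have r: "r \<in> outcomes n m" using iv q out_upd by auto
  have ipa: "i \<notin> Pa j" using dis iv by auto
  have "\<forall>l\<in>Pa j. r l = p l" using q iv ipa by auto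
  moreover have oq: "ord j q = ord j p" using net_ctx[OF net j q(1) p] q(2) by auto
  have sto: "sto m (ord j p)" using net_sto[OF net j p] .
  have "r j = p j \<or> (r j, p j) \<in> ord j p"
  proof (cases "i = j")
    case True
    then have "(r j, q j) \<in> ord j p" using iv oq by auto
    then show ?thesis using q(3) sto_trans[OF sto] by metis
  next
    case False
    then show ?thesis using q(3) iv by auto
  qed
  ultimately show ?case using r by auto
qed

lemma noncyc_aux:
  assumes net: "complete_acyclic_cpnet n m k Pa ord"
  shows "F \<subseteq> {0..<n} \<Longrightarrow> (w,w) \<notin> (flipS n m ord F)\<^sup>+"
proof (induction "card F" arbitrary: F w rule: less_induct)
  case less
  show ?case
  proof
    assume cyc: "(w,w) \<in> (flipS n m ord F)\<^sup>+"
    have finF: "finite F" using less.prems finite_subset by blast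
    have "F \<noteq> {}"
    proof
      assume "F = {}"
      then have "flipS n m ord F = {}" unfolding flipS_def by auto
      then show False using cyc by auto
    qed
    then obtain f0 where f0: "f0 \<in> F" by auto
    let ?G = "{(j, i). i < n \<and> j \<in> Pa i}"
    have "?G \<subseteq> {0..<n} \<times> {0..<n}" using net_pa[OF net] by auto
    then have "finite ?G" by (meson finite_SigmaI finite_atLeastLessThan finite_subset)
    then have "wf ?G" using wf_iff_acyclic_if_finite net_acyc[OF net] by blast
    then obtain j where j: "j \<in> F" "\<forall>y. (y, j) \<in> ?G \<longrightarrow> y \<notin> F"
      using f0 unfolding wf_eq_minimal by (elim allE[of _ F] allE[of _ f0]) blast
    have jn: "j < n" using j less.prems by auto
    have dis: "Pa j \<inter> F = {}" using j jn by auto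
    have split: "flipS n m ord F = flipS n m ord (F - {j}) \<union> flipS n m ord {j}"
      unfolding flipS_def using j by auto
    have w: "w \<in> outcomes n m" using cyc unfolding flipS_def by (auto dest: tranclD)
    from trancl_split[OF cyc[unfolded split]]
    show False
    proof
      assume "(w, w) \<in> (flipS n m ord (F - {j}))\<^sup>+"
      moreover have "card (F - {j}) < card F" using finF j by (meson card_Diff1_less)
      ultimately show False using less.hyps[of "F - {j}"] less.prems by blast
    next
      assume "(w, w) \<in> (flipS n m ord (F - {j}) \<union> flipS n m ord {j})\<^sup>* O flipS n m ord {j} O
          (flipS n m ord (F - {j}) \<union> flipS n m ord {j})\<^sup>*"
      then obtain u u' where uu: "(w,u) \<in> (flipS n m ord F)\<^sup>*" "(u,u') \<in> flipS n m ord {j}"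
        "(u',w) \<in> (flipS n m ord F)\<^sup>*" using split by auto
      have A: "u \<in> outcomes n m" "\<forall>l\<in>Pa j. u l = w l" "u j = w j \<or> (u j, w j) \<in> ord j w"
        using flip_mono[OF net jn dis w uu(1)] by auto
      from uu(2) obtain v where v: "v < m" "u' = u(j := v)" "(v, u j) \<in> ord j u"
        unfolding flipS_def by auto
      have u': "u' \<in> outcomes n m" using v A out_upd jn by auto
      have B: "\<forall>l\<in>Pa j. w l = u' l" "w j = u' j \<or> (w j, u' j) \<in> ord j u'"
        using flip_mono[OF net jn dis u' uu(3)] by auto
      have jpa: "j \<notin> Pa j" using net_pa[OF net jn] by auto
      have o1: "ord j u = ord j w" using net_ctx[OF net jn A(1) w] A(2) by auto
      have o2: "ord j u' = ord j w" using net_ctx[OF net jn u' w] B(1) by auto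
      have "(u' j, u j) \<in> ord j w" using v o1 by auto
      moreover have sto: "sto m (ord j w)" using net_sto[OF net jn w] .
      ultimately have "(w j, w j) \<in> ord j w" using A(3) B(2) o2 sto_trans[OF sto] by metis
      then show False using sto_irr[OF sto] by auto
    qed
  qed
qed

lemma noncyc:
  assumes net: "complete_acyclic_cpnet n m k Pa ord"
  shows "(w,w) \<notin> (improving_flip n m ord)\<^sup>+"
  using noncyc_aux[OF net, of "{0..<n}"] flip_UNIV by auto

lemma sem:
  assumes net: "complete_acyclic_cpnet n m k Pa ord" and t: "t \<in> outcomes n m" and i: "i < n"
    and ab: "a < m" "b < m" "a \<noteq> b"
  shows "(t(i := b), t(i := a)) \<in> (improving_flip n m ord)\<^sup>+ \<longleftrightarrow> (a, b) \<in> ord i t"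
proof -
  have ta: "t(i:=a) \<in> outcomes n m" and tb: "t(i:=b) \<in> outcomes n m" using out_upd t i ab by auto
  have ipa: "i \<notin> Pa i" using net_pa[OF net i] by auto
  have oa: "ord i (t(i:=a)) = ord i t" by (rule net_ctx[OF net i ta t]) (use ipa in auto)
  have ob: "ord i (t(i:=b)) = ord i t" by (rule net_ctx[OF net i tb t]) (use ipa in auto)
  show ?thesis
  proof
    assume h: "(t(i := b), t(i := a)) \<in> (improving_flip n m ord)\<^sup>+"
    show "(a, b) \<in> ord i t"
    proof (rule ccontr)
      assume "(a, b) \<notin> ord i t"
      then have "(b, a) \<in> ord i t" using net_sto[OF net i t] ab unfolding sto_def by auto
      then have "(t(i := a), t(i := b)) \<in> improving_flip n m ord"
        unfolding improving_flip_def using ta i ab oa by fastforce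
      then show False using h noncyc[OF net] by (meson trancl_into_trancl2)
    qed
  next
    assume "(a, b) \<in> ord i t"
    then have "(t(i := b), t(i := a)) \<in> improving_flip n m ord"
      unfolding improving_flip_def using tb i ab ob by fastforce
    then show "(t(i := b), t(i := a)) \<in> (improving_flip n m ord)\<^sup>+" by auto
  qed
qed



lemma fin_out: "finite (outcomes n m)"
proof -
  have "outcomes n m \<subseteq> (\<lambda>f i. if i < n then f i else 0) ` (PiE {0..<n} (\<lambda>_. {0..<m}))"
  proof
    fix w assume w: "w \<in> outcomes n m"
    have "w = (\<lambda>i. if i < n then restrict w {0..<n} i else 0)" using w unfolding outcomes_def
      by (auto simp: fun_eq_iff)
    moreover have "restrict w {0..<n} \<in> PiE {0..<n} (\<lambda>_. {0..<m})" using w unfolding outcomes_def by auto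
    ultimately show "w \<in> (\<lambda>f i. if i < n then f i else 0) ` (PiE {0..<n} (\<lambda>_. {0..<m}))" by blast
  qed
  moreover have "finite (PiE {0..<n} (\<lambda>_. {0..<m}))" by (simp add: finite_PiE)
  ultimately show ?thesis using finite_subset by blast
qed

lemma fin_X: "swap_space n m X \<Longrightarrow> finite X"
proof -
  assume "swap_space n m X"
  then have "X \<subseteq> outcomes n m \<times> outcomes n m" unfolding swap_space_def is_swap_def by auto
  then show ?thesis using fin_out finite_subset by blast
qed

lemma fin_C: "finite (C_ac n m k X)" if "finite X"
proof -
  have "C_ac n m k X \<subseteq> (\<lambda>A x. x \<in> A) ` Pow X"
  proof
    fix c assume "c \<in> C_ac n m k X"
    then obtain ord where c: "c = cp_concept n m X ord" unfolding C_ac_def by auto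
    have "c = (\<lambda>x. x \<in> {x\<in>X. (snd x, fst x) \<in> (improving_flip n m ord)\<^sup>+})"
      unfolding c cp_concept_def by auto
    then show "c \<in> (\<lambda>A x. x \<in> A) ` Pow X" by blast
  qed
  then show ?thesis using that finite_subset by blast
qed

lemma teach_fin: "finite X \<Longrightarrow> finite {card S |S. teaching_set X C c S}"
proof -
  assume fx: "finite X"
  have "{card S |S. teaching_set X C c S} \<subseteq> {..card (X \<times> (UNIV::bool set))}"
  proof
    fix s assume "s \<in> {card S |S. teaching_set X C c S}"
    then obtain S where seq: "s = card S" and ts: "teaching_set X C c S" by auto
    have "S \<subseteq> X \<times> UNIV" using ts unfolding teaching_set_def by (elim conjE)
    moreover have "card S \<le> card (X \<times> (UNIV::bool set))"
      by (rule card_mono) (use fx \<open>S \<subseteq> X \<times> UNIV\<close> in auto)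
    ultimately show "s \<in> {..card (X \<times> (UNIV::bool set))}" using seq by simp
  qed
  then show ?thesis using finite_subset by blast
qed

lemma TD_upper:
  assumes "finite X" "finite C" "C \<noteq> {}" "\<And>c. c \<in> C \<Longrightarrow> \<exists>S. teaching_set X C c S \<and> card S \<le> B"
  shows "TD X C \<le> B"
proof -
  have "\<forall>c\<in>C. TD_of X C c \<le> B"
  proof
    fix c assume c: "c \<in> C"
    obtain S where S: "teaching_set X C c S" "card S \<le> B" using assms(4)[OF c] by auto
    have "TD_of X C c \<le> card S" unfolding TD_of_def
      by (rule Min_le) (use teach_fin[OF assms(1)] S in auto)
    then show "TD_of X C c \<le> B" using S by auto
  qed
  then show ?thesis unfolding TD_def using assms(2,3) by simp
qed

lemma TD_lower:
  assumes "finite X" "finite C" "c \<in> C" "teaching_set X C c S0"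
    "\<And>S. teaching_set X C c S \<Longrightarrow> B \<le> card S"
  shows "B \<le> TD X C"
proof -
  have "B \<le> TD_of X C c" unfolding TD_of_def
    using teach_fin[OF assms(1)] assms(4,5) by (subst Min_ge_iff) auto
  also have "TD_of X C c \<le> TD X C" unfolding TD_def using assms(2,3) by simp
  finally show ?thesis .
qed

lemma teach_full:
  assumes "swap_space n m X" "c \<in> C_ac n m k X"
  shows "teaching_set X (C_ac n m k X) c ((\<lambda>x. (x, c x)) ` X)"
  unfolding teaching_set_def
proof (intro conjI ballI impI)
  show "(\<lambda>x. (x, c x)) ` X \<subseteq> X \<times> UNIV" by auto
  show "\<And>xl. xl \<in> (\<lambda>x. (x, c x)) ` X \<Longrightarrow> case xl of (x, l) \<Rightarrow> c x = l" by auto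
  fix c' assume c': "c' \<in> C_ac n m k X" and h: "\<forall>(x, l)\<in>(\<lambda>x. (x, c x)) ` X. c' x = l"
  obtain o1 where o1: "c = cp_concept n m X o1" using assms(2) unfolding C_ac_def by auto
  obtain o2 where o2: "c' = cp_concept n m X o2" using c' unfolding C_ac_def by auto
  show "c' = c"
  proof
    fix x show "c' x = c x"
      using h o1 o2 unfolding cp_concept_def by (cases "x \<in> X") auto
  qed
qed

lemma is_swap_pair:
  assumes "t \<in> outcomes n m" "i < n" "a < m" "b < m" "a \<noteq> b"
  shows "is_swap n m (t(i:=a), t(i:=b))"
proof -
  have "{l. l < n \<and> (t(i:=a)) l \<noteq> (t(i:=b)) l} = {i}" using assms by auto
  then show ?thesis unfolding is_swap_def using out_upd assms by auto
qed

definition Ex :: "((nat \<Rightarrow> nat) \<times> (nat \<Rightarrow> nat)) set \<Rightarrow> ((nat \<Rightarrow> nat) \<times> (nat \<Rightarrow> nat) \<Rightarrow> bool)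
   \<Rightarrow> nat \<Rightarrow> (nat \<Rightarrow> nat) \<Rightarrow> nat \<Rightarrow> nat \<Rightarrow> (((nat \<Rightarrow> nat) \<times> (nat \<Rightarrow> nat)) \<times> bool) set" where
  "Ex X c i t a b = (\<lambda>x. (x, c x)) ` {x \<in> X. x = (t(i:=a), t(i:=b)) \<or> x = (t(i:=b), t(i:=a))}"

lemma card_Ex:
  assumes X: "swap_space n m X" and t: "t \<in> outcomes n m" "i < n" "a < m" "b < m"
  shows "card (Ex X c i t a b) \<le> 1"
proof -
  let ?p = "(t(i:=a), t(i:=b))" and ?q = "(t(i:=b), t(i:=a))"
  have "{x \<in> X. x = ?p \<or> x = ?q} \<subseteq> {?p} \<or> {x \<in> X. x = ?p \<or> x = ?q} \<subseteq> {?q}"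
  proof (cases "a = b")
    case True then show ?thesis by auto
  next
    case False
    then have "is_swap n m ?p" using is_swap_pair t by blast
    then have "?p \<in> X \<longleftrightarrow> ?q \<notin> X" using X unfolding swap_space_def by blast
    then show ?thesis by auto
  qed
  then obtain r where r: "{x \<in> X. x = ?p \<or> x = ?q} \<subseteq> {r}" by blast
  have "card (Ex X c i t a b) \<le> card {x \<in> X. x = ?p \<or> x = ?q}"
    unfolding Ex_def by (rule card_image_le) (use r finite_subset in blast)
  also have "\<dots> \<le> card {r}" by (rule card_mono) (use r in auto)
  finally show ?thesis by simp
qed

lemma Ex_sub: "Ex X c i t a b \<subseteq> (\<lambda>x. (x, c x)) ` X"
  unfolding Ex_def by auto

lemma cons_Ex:
  assumes X: "swap_space n m X"
    and N: "complete_acyclic_cpnet n m k Pa ord" and N': "complete_acyclic_cpnet n m k' Pa' ord'"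
    and t: "t \<in> outcomes n m" "i < n" "a < m" "b < m" "a \<noteq> b"
    and h: "\<forall>(x,l)\<in>Ex X (cp_concept n m X ord) i t a b. cp_concept n m X ord' x = l"
  shows "(a,b) \<in> ord' i t \<longleftrightarrow> (a,b) \<in> ord i t"
proof -
  let ?p = "(t(i:=a), t(i:=b))" and ?q = "(t(i:=b), t(i:=a))"
  have sw: "is_swap n m ?p" using is_swap_pair t by blast
  then have pq: "?p \<in> X \<longleftrightarrow> ?q \<notin> X" using X unfolding swap_space_def by blast
  have s1: "(t(i := b), t(i := a)) \<in> (improving_flip n m ord)\<^sup>+ \<longleftrightarrow> (a, b) \<in> ord i t"
    using sem[OF N t] by auto
  have s2: "(t(i := b), t(i := a)) \<in> (improving_flip n m ord')\<^sup>+ \<longleftrightarrow> (a, b) \<in> ord' i t"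
    using sem[OF N' t] by auto
  have s3: "(t(i := a), t(i := b)) \<in> (improving_flip n m ord)\<^sup>+ \<longleftrightarrow> (b, a) \<in> ord i t"
    using sem[OF N t(1,2,4,3)] t(5) by auto
  have s4: "(t(i := a), t(i := b)) \<in> (improving_flip n m ord')\<^sup>+ \<longleftrightarrow> (b, a) \<in> ord' i t"
    using sem[OF N' t(1,2,4,3)] t(5) by auto
  have st: "sto m (ord i t)" "sto m (ord' i t)" using net_sto N N' t by auto
  have as1: "(a,b) \<in> ord i t \<longleftrightarrow> (b,a) \<notin> ord i t"
    using sto_tot[OF st(1) t(3,4,5)] sto_trans[OF st(1)] sto_irr[OF st(1)] by blast
  have as2: "(a,b) \<in> ord' i t \<longleftrightarrow> (b,a) \<notin> ord' i t"
    using sto_tot[OF st(2) t(3,4,5)] sto_trans[OF st(2)] sto_irr[OF st(2)] by blast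
  show ?thesis
  proof (cases "?p \<in> X")
    case True
    then have "(?p, cp_concept n m X ord ?p) \<in> Ex X (cp_concept n m X ord) i t a b" unfolding Ex_def by auto
    then have "cp_concept n m X ord' ?p = cp_concept n m X ord ?p" using h by auto
    then show ?thesis using True s1 s2 unfolding cp_concept_def by simp
  next
    case False
    then have q: "?q \<in> X" using pq by auto
    then have "(?q, cp_concept n m X ord ?q) \<in> Ex X (cp_concept n m X ord) i t a b" unfolding Ex_def by auto
    then have "cp_concept n m X ord' ?q = cp_concept n m X ord ?q" using h by auto
    then show ?thesis using q s3 s4 as1 as2 unfolding cp_concept_def by simp
  qed
qed

definition FullEx where
  "FullEx n m X ord i t = (\<Union>p\<in>adj (ord i t). Ex X (cp_concept n m X ord) i t (fst p) (snd p))"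

lemma card_FullEx:
  assumes X: "swap_space n m X" and N: "complete_acyclic_cpnet n m k Pa ord"
    and t: "t \<in> outcomes n m" "i < n"
  shows "card (FullEx n m X ord i t) \<le> m - 1"
proof -
  have st: "sto m (ord i t)" using net_sto N t by auto
  have fin: "finite (adj (ord i t))"
    using st adj_sub unfolding sto_def
    by (meson finite_SigmaI finite_atLeastLessThan finite_subset)
  have "card (FullEx n m X ord i t) \<le> (\<Sum>p\<in>adj (ord i t). card (Ex X (cp_concept n m X ord) i t (fst p) (snd p)))"
    unfolding FullEx_def by (rule card_UN_le[OF fin])
  also have "\<dots> \<le> (\<Sum>p\<in>adj (ord i t). 1)"
  proof (rule sum_mono)
    fix p assume p: "p \<in> adj (ord i t)"
    then have "fst p < m" "snd p < m" using st adj_sub sto_dom by (metis prod.collapse subsetD)+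
    then show "card (Ex X (cp_concept n m X ord) i t (fst p) (snd p)) \<le> 1"
      using card_Ex[OF X t] by auto
  qed
  also have "\<dots> = card (adj (ord i t))" by simp
  also have "\<dots> \<le> m - 1" using card_adj[OF st] .
  finally show ?thesis .
qed

lemma cons_Full:
  assumes X: "swap_space n m X"
    and N: "complete_acyclic_cpnet n m k Pa ord" and N': "complete_acyclic_cpnet n m k' Pa' ord'"
    and t: "t \<in> outcomes n m" "i < n"
    and h: "\<forall>(x,l)\<in>FullEx n m X ord i t. cp_concept n m X ord' x = l"
  shows "ord' i t = ord i t"
proof (rule adj_gen)
  show st: "sto m (ord i t)" "sto m (ord' i t)" using net_sto N N' t by auto
  show "adj (ord i t) \<subseteq> ord' i t"
  proof
    fix p assume p: "p \<in> adj (ord i t)"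
    obtain a b where pab: "p = (a,b)" by force
    have ab: "(a,b) \<in> ord i t" using p pab adj_sub by auto
    then have "a < m" "b < m" "a \<noteq> b" using st sto_dom sto_irr by metis+
    moreover have "\<forall>(x,l)\<in>Ex X (cp_concept n m X ord) i t a b. cp_concept n m X ord' x = l"
      using h p pab unfolding FullEx_def by force
    ultimately show "p \<in> ord' i t" using cons_Ex[OF X N N' t] ab pab by blast
  qed
qed



lemma flip_eq:
  assumes "\<And>i t. i < n \<Longrightarrow> t \<in> outcomes n m \<Longrightarrow> ord' i t = ord i t"
  shows "improving_flip n m ord' = improving_flip n m ord"
  unfolding improving_flip_def using assms by fastforce

lemma graph_sub: "(\<lambda>x. (x, c x)) ` X \<subseteq> X \<times> UNIV" by auto

lemma FullEx_sub: "FullEx n m X ord i t \<subseteq> (\<lambda>x. (x, cp_concept n m X ord x)) ` X"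
  unfolding FullEx_def using Ex_sub by blast

lemma teach:
  assumes X: "swap_space n m X" and N: "complete_acyclic_cpnet n m k Pa ord"
    and T: "\<And>i. i < n \<Longrightarrow> T i \<subseteq> outcomes n m"
    and E: "E \<subseteq> (\<lambda>x. (x, cp_concept n m X ord x)) ` X"
    and H: "\<And>Pa' ord'. complete_acyclic_cpnet n m k Pa' ord' \<Longrightarrow>
        (\<forall>i<n. \<forall>t\<in>T i. ord' i t = ord i t) \<Longrightarrow> (\<forall>(x,l)\<in>E. cp_concept n m X ord' x = l) \<Longrightarrow>
        \<forall>i<n. \<forall>t\<in>outcomes n m. \<exists>t'\<in>T i. \<forall>l\<in>Pa i \<union> Pa' i. t' l = t l"
  shows "\<exists>S. teaching_set X (C_ac n m k X) (cp_concept n m X ord) S \<and>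
     card S \<le> (\<Sum>i<n. card (T i)) * (m - 1) + card E"
proof -
  let ?c = "cp_concept n m X ord"
  define S where "S = (\<Union>i<n. \<Union>t\<in>T i. FullEx n m X ord i t) \<union> E"
  have Ssub: "S \<subseteq> (\<lambda>x. (x, ?c x)) ` X" unfolding S_def using E FullEx_sub by blast
  have finT: "finite (T i)" if "i < n" for i using T[OF that] fin_out finite_subset by blast
  have "card S \<le> card (\<Union>i<n. \<Union>t\<in>T i. FullEx n m X ord i t) + card E"
    unfolding S_def by (rule card_Un_le)
  also have "card (\<Union>i<n. \<Union>t\<in>T i. FullEx n m X ord i t) \<le> (\<Sum>i<n. card (\<Union>t\<in>T i. FullEx n m X ord i t))"
    by (rule card_UN_le) simp
  also have "\<dots> \<le> (\<Sum>i<n. card (T i) * (m - 1))"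
  proof (rule sum_mono)
    fix i assume i: "i \<in> {..<n}"
    have "card (\<Union>t\<in>T i. FullEx n m X ord i t) \<le> (\<Sum>t\<in>T i. card (FullEx n m X ord i t))"
      by (rule card_UN_le) (use finT i in auto)
    also have "\<dots> \<le> (\<Sum>t\<in>T i. m - 1)"
      by (rule sum_mono) (use card_FullEx[OF X N] T i in blast)
    finally show "card (\<Union>t\<in>T i. FullEx n m X ord i t) \<le> card (T i) * (m - 1)" by simp
  qed
  also have "\<dots> = (\<Sum>i<n. card (T i)) * (m - 1)" by (simp add: sum_distrib_right)
  finally have cardS: "card S \<le> (\<Sum>i<n. card (T i)) * (m - 1) + card E" by simp
  have "teaching_set X (C_ac n m k X) ?c S"
    unfolding teaching_set_def
  proof (intro conjI ballI impI)
    show "S \<subseteq> X \<times> UNIV" using Ssub by auto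
    show "\<And>xl. xl \<in> S \<Longrightarrow> case xl of (x, l) \<Rightarrow> ?c x = l" using Ssub by auto
    fix c' assume c': "c' \<in> C_ac n m k X" and h: "\<forall>(x, l)\<in>S. c' x = l"
    obtain Pa' ord' where N': "complete_acyclic_cpnet n m k Pa' ord'" and c'd: "c' = cp_concept n m X ord'"
      using c' unfolding C_ac_def by auto
    have agT: "\<forall>i<n. \<forall>t\<in>T i. ord' i t = ord i t"
    proof (intro allI impI ballI)
      fix i t assume i: "i < n" and t: "t \<in> T i"
      have "\<forall>(x,l)\<in>FullEx n m X ord i t. cp_concept n m X ord' x = l"
        using h c'd i t unfolding S_def by blast
      then show "ord' i t = ord i t" using cons_Full[OF X N N'] T i t by blast
    qed
    have agE: "\<forall>(x,l)\<in>E. cp_concept n m X ord' x = l" using h c'd unfolding S_def by blast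
    have cov: "\<forall>i<n. \<forall>t\<in>outcomes n m. \<exists>t'\<in>T i. \<forall>l\<in>Pa i \<union> Pa' i. t' l = t l"
      using H[OF N' agT agE] .
    have "ord' i t = ord i t" if i: "i < n" and t: "t \<in> outcomes n m" for i t
    proof -
      obtain t' where t': "t' \<in> T i" "\<forall>l\<in>Pa i \<union> Pa' i. t' l = t l" using cov i t by blast
      have t'o: "t' \<in> outcomes n m" using T i t' by blast
      have "ord' i t = ord' i t'" by (rule net_ctx[OF N' i t t'o]) (use t' in auto)
      also have "\<dots> = ord i t'" using agT i t' by auto
      also have "\<dots> = ord i t" by (rule net_ctx[OF N i t'o t]) (use t' in auto)
      finally show ?thesis .
    qed
    then have "improving_flip n m ord' = improving_flip n m ord" by (rule flip_eq)
    then show "c' = ?c" unfolding c'd cp_concept_def by simp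
  qed
  then show ?thesis using cardS by blast
qed



lemma card_le1: assumes "finite A" "card A \<le> 1" shows "A = {} \<or> (\<exists>j. A = {j})"
proof (cases "card A = 0")
  case True then show ?thesis using assms by simp
next
  case False then have "card A = 1" using assms(2) by linarith
  then show ?thesis by (simp add: card_1_singleton_iff)
qed

lemma zero_out: "0 < m \<Longrightarrow> (\<lambda>_. 0) \<in> outcomes n m"
  unfolding outcomes_def by auto

definition cst :: "nat \<Rightarrow> nat \<Rightarrow> nat \<Rightarrow> nat" where "cst n a = (\<lambda>l. if l < n then a else 0)"

lemma cst_out: "a < m \<Longrightarrow> cst n a \<in> outcomes n m"
  unfolding outcomes_def cst_def by auto

lemma up0:
  assumes X: "swap_space n m X" and m: "0 < m" and N: "complete_acyclic_cpnet n m 0 Pa ord"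
  shows "\<exists>S. teaching_set X (C_ac n m 0 X) (cp_concept n m X ord) S \<and> card S \<le> n * (m - 1)"
proof -
  have "\<exists>S. teaching_set X (C_ac n m 0 X) (cp_concept n m X ord) S \<and>
     card S \<le> (\<Sum>i<n. card ((\<lambda>_. {\<lambda>_::nat. 0::nat}) i)) * (m - 1) + card ({}::(((nat \<Rightarrow> nat) \<times> (nat \<Rightarrow> nat)) \<times> bool) set)"
  proof (rule teach[OF X N, of "\<lambda>_. {\<lambda>_::nat. 0::nat}" "{}"])
    show "\<And>i. i < n \<Longrightarrow> {\<lambda>_. 0} \<subseteq> outcomes n m" using zero_out[OF m] by auto
    show "{} \<subseteq> (\<lambda>x. (x, cp_concept n m X ord x)) ` X" by auto
    fix Pa' ord' assume N': "complete_acyclic_cpnet n m 0 Pa' ord'"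
    have "Pa i = {}" "Pa' i = {}" if "i < n" for i
      using net_card[OF N that] net_fin[OF N that] net_card[OF N' that] net_fin[OF N' that] by auto
    then show "\<forall>i<n. \<forall>t\<in>outcomes n m. \<exists>t'\<in>{\<lambda>_. 0}. \<forall>l\<in>Pa i \<union> Pa' i. t' l = t l" by auto
  qed
  then show ?thesis by simp
qed

lemma card_T_full:
  assumes i: "i < n"
  shows "card {t \<in> outcomes n m. t i = 0} \<le> m ^ (n - 1)"
proof -
  let ?A = "{0..<n} - {i}"
  have inj: "inj_on (\<lambda>t. restrict t ?A) {t \<in> outcomes n m. t i = 0}"
  proof (rule inj_onI)
    fix t t' assume t: "t \<in> {t \<in> outcomes n m. t i = 0}" and t': "t' \<in> {t \<in> outcomes n m. t i = 0}"
      and e: "restrict t ?A = restrict t' ?A"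
    show "t = t'"
    proof
      fix l show "t l = t' l"
      proof (cases "l \<in> ?A")
        case True then show ?thesis using e by (metis restrict_apply')
      next
        case False then show ?thesis using t t' unfolding outcomes_def by auto
      qed
    qed
  qed
  have "(\<lambda>t. restrict t ?A) ` {t \<in> outcomes n m. t i = 0} \<subseteq> PiE ?A (\<lambda>_. {0..<m})"
  proof (rule image_subsetI)
    fix t assume "t \<in> {t \<in> outcomes n m. t i = 0}"
    then show "restrict t ?A \<in> PiE ?A (\<lambda>_. {0..<m})" unfolding restrict_PiE_iff outcomes_def by auto
  qed
  then have "card ((\<lambda>t. restrict t ?A) ` {t \<in> outcomes n m. t i = 0}) \<le> card (PiE ?A (\<lambda>_. {0..<m}))"
    by (rule card_mono[rotated]) (simp add: finite_PiE)
  also have "\<dots> = m ^ (n - 1)" using i by (simp add: card_PiE)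
  finally show ?thesis using card_image[OF inj] by simp
qed

lemma upfull:
  assumes X: "swap_space n m X" and N: "complete_acyclic_cpnet n m k Pa ord"
  shows "\<exists>S. teaching_set X (C_ac n m k X) (cp_concept n m X ord) S \<and> card S \<le> n * m ^ (n - 1) * (m - 1)"
proof -
  have "\<exists>S. teaching_set X (C_ac n m k X) (cp_concept n m X ord) S \<and>
     card S \<le> (\<Sum>i<n. card ((\<lambda>i. {t \<in> outcomes n m. t i = 0}) i)) * (m - 1) + card ({}::(((nat \<Rightarrow> nat) \<times> (nat \<Rightarrow> nat)) \<times> bool) set)"
  proof (rule teach[OF X N, of "\<lambda>i. {t \<in> outcomes n m. t i = 0}" "{}"])
    show "\<And>i. i < n \<Longrightarrow> {t \<in> outcomes n m. t i = 0} \<subseteq> outcomes n m" by auto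
    show "{} \<subseteq> (\<lambda>x. (x, cp_concept n m X ord x)) ` X" by auto
    fix Pa' ord' assume N': "complete_acyclic_cpnet n m k Pa' ord'"
    show "\<forall>i<n. \<forall>t\<in>outcomes n m. \<exists>t'\<in>{t \<in> outcomes n m. t i = 0}. \<forall>l\<in>Pa i \<union> Pa' i. t' l = t l"
    proof (intro allI impI ballI)
      fix i t assume i: "i < n" and t: "t \<in> outcomes n m"
      have "t(i := 0) \<in> {t \<in> outcomes n m. t i = 0}"
        using out_upd[OF t i] out_lt[OF t i] by auto
      moreover have "\<forall>l\<in>Pa i \<union> Pa' i. (t(i:=0)) l = t l" using net_pa[OF N i] net_pa[OF N' i] by auto
      ultimately show "\<exists>t'\<in>{t \<in> outcomes n m. t i = 0}. \<forall>l\<in>Pa i \<union> Pa' i. t' l = t l" by blast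
    qed
  qed
  then obtain S where S: "teaching_set X (C_ac n m k X) (cp_concept n m X ord) S"
    "card S \<le> (\<Sum>i<n. card {t \<in> outcomes n m. t i = 0}) * (m - 1)" by auto
  have "(\<Sum>i<n. card {t \<in> outcomes n m. t i = 0}) \<le> (\<Sum>i<n. m ^ (n - 1))"
    by (rule sum_mono) (use card_T_full in auto)
  then have "(\<Sum>i<n. card {t \<in> outcomes n m. t i = 0}) * (m - 1) \<le> n * m ^ (n - 1) * (m - 1)"
    using mult_le_mono1 by fastforce
  then show ?thesis using S by (meson le_trans)
qed

lemma up1:
  assumes X: "swap_space n m X" and m: "0 < m" and N: "complete_acyclic_cpnet n m 1 Pa ord"
  shows "\<exists>S. teaching_set X (C_ac n m 1 X) (cp_concept n m X ord) S \<and> card S \<le> n * m * (m - 1)"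
proof -
  define z where "z = (\<lambda>_::nat. 0::nat)"
  define T where "T i = (if Pa i = {} then cst n ` {..<m} else (\<lambda>a. z(the_elem (Pa i) := a)) ` {..<m})" for i
  have pa1: "Pa i = {} \<or> (\<exists>j. Pa i = {j})" if "i < n" for i
    using card_le1 net_card[OF N that] net_fin[OF N that] by auto
  have Tsub: "T i \<subseteq> outcomes n m" if i: "i < n" for i
  proof (cases "Pa i = {}")
    case True then show ?thesis unfolding T_def using cst_out by auto
  next
    case False
    then obtain j where j: "Pa i = {j}" using pa1 i by auto
    then have "j < n" using net_pa[OF N i] by auto
    then show ?thesis unfolding T_def using j out_upd zero_out[OF m] unfolding z_def by auto
  qed
  have cT: "card (T i) \<le> m" for i unfolding T_def
    using card_image_le[of "{..<m}"] by (cases "Pa i = {}") auto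
  have "\<exists>S. teaching_set X (C_ac n m 1 X) (cp_concept n m X ord) S \<and>
     card S \<le> (\<Sum>i<n. card (T i)) * (m - 1) + card ({}::(((nat \<Rightarrow> nat) \<times> (nat \<Rightarrow> nat)) \<times> bool) set)"
  proof (rule teach[OF X N, of T "{}"])
    show "\<And>i. i < n \<Longrightarrow> T i \<subseteq> outcomes n m" using Tsub by auto
    show "{} \<subseteq> (\<lambda>x. (x, cp_concept n m X ord x)) ` X" by auto
    fix Pa' ord' assume N': "complete_acyclic_cpnet n m 1 Pa' ord'"
      and agT: "\<forall>i<n. \<forall>t\<in>T i. ord' i t = ord i t"
    show "\<forall>i<n. \<forall>t\<in>outcomes n m. \<exists>t'\<in>T i. \<forall>l\<in>Pa i \<union> Pa' i. t' l = t l"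
    proof (intro allI impI ballI)
      fix i t assume i: "i < n" and t: "t \<in> outcomes n m"
      have pa1': "Pa' i = {} \<or> (\<exists>j. Pa' i = {j})"
        using card_le1 net_card[OF N' i] net_fin[OF N' i] by auto
      show "\<exists>t'\<in>T i. \<forall>l\<in>Pa i \<union> Pa' i. t' l = t l"
      proof (cases "Pa i = {}")
        case True
        show ?thesis
        proof (cases "Pa' i = {}")
          case True2: True
          have "cst n 0 \<in> T i" unfolding T_def using True m by auto
          then show ?thesis using True True2 by auto
        next
          case False
          then obtain j where j: "Pa' i = {j}" using pa1' by auto
          then have jn: "j < n" using net_pa[OF N' i] by auto
          have "cst n (t j) \<in> T i" unfolding T_def using True out_lt[OF t jn] by auto
          moreover have "cst n (t j) j = t j" unfolding cst_def using jn by auto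
          ultimately show ?thesis using True j by auto
        qed
      next
        case False
        then obtain j where j: "Pa i = {j}" using pa1 i by auto
        then have jn: "j < n" using net_pa[OF N i] by auto
        obtain w w' where ww: "w \<in> outcomes n m" "w' \<in> outcomes n m" "\<forall>l. l \<noteq> j \<longrightarrow> w l = w' l"
          "ord i w \<noteq> ord i w'" using net_nd[OF N i] j by blast
        let ?u = "z(j := w j)" and ?u' = "z(j := w' j)"
        have Tu: "?u \<in> T i" "?u' \<in> T i" unfolding T_def using j out_lt[OF ww(1) jn] out_lt[OF ww(2) jn]
          by auto
        have uo: "?u \<in> outcomes n m" "?u' \<in> outcomes n m" using Tu Tsub i by auto
        have "ord i ?u = ord i w" by (rule net_ctx[OF N i uo(1) ww(1)]) (use j in auto)
        moreover have "ord i ?u' = ord i w'" by (rule net_ctx[OF N i uo(2) ww(2)]) (use j in auto)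
        ultimately have ne: "ord' i ?u \<noteq> ord' i ?u'" using agT i Tu ww(4) by auto
        have "j \<in> Pa' i"
        proof (rule ccontr)
          assume "j \<notin> Pa' i"
          then have "ord' i ?u = ord' i ?u'" by (intro net_ctx[OF N' i uo]) auto
          then show False using ne by auto
        qed
        then have j': "Pa' i = {j}" using pa1' by auto
        have "z(j := t j) \<in> T i" unfolding T_def using j out_lt[OF t jn] by auto
        then show ?thesis using j j' by (intro bexI[of _ "z(j := t j)"]) auto
      qed
    qed
  qed
  then obtain S where S: "teaching_set X (C_ac n m 1 X) (cp_concept n m X ord) S"
    "card S \<le> (\<Sum>i<n. card (T i)) * (m - 1)" by auto
  have "(\<Sum>i<n. card (T i)) \<le> (\<Sum>i<n. m)" by (rule sum_mono) (use cT in auto)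
  then have "(\<Sum>i<n. card (T i)) * (m - 1) \<le> n * m * (m - 1)"
    using mult_le_mono1 by fastforce
  then show ?thesis using S by (meson le_trans)
qed



definition ins :: "nat \<Rightarrow> nat \<Rightarrow> nat" where "ins i l = (if l < i then l else Suc l)"
definition del :: "nat \<Rightarrow> nat \<Rightarrow> nat" where "del i p = (if p < i then p else p - 1)"

lemma del_ins[simp]: "del i (ins i l) = l" unfolding ins_def del_def by auto
lemma ins_del: "p \<noteq> i \<Longrightarrow> ins i (del i p) = p" unfolding ins_def del_def by auto
lemma ins_ne: "ins i l \<noteq> i" unfolding ins_def by auto
lemma ins_lt: "l < n - 1 \<Longrightarrow> i < n \<Longrightarrow> ins i l < n" unfolding ins_def by auto
lemma del_lt: "p < n \<Longrightarrow> p \<noteq> i \<Longrightarrow> i < n \<Longrightarrow> del i p < n - 1" unfolding del_def by auto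
lemma inj_del: "inj_on (del i) (- {i})"
  unfolding inj_on_def del_def by auto
lemma inj_ins: "inj (ins i)"
  unfolding inj_on_def ins_def by auto

definition ctx :: "nat \<Rightarrow> nat \<Rightarrow> (nat \<Rightarrow> nat) \<Rightarrow> nat \<Rightarrow> nat" where
  "ctx n i s = (\<lambda>l. if l < n \<and> l \<noteq> i then s (del i l) - 1 else 0)"

lemma ctx_out:
  assumes "s \<in> PiE {0..<n-1} (\<lambda>_. {1..m})" "i < n" "0 < m"
  shows "ctx n i s \<in> outcomes n m"
  unfolding outcomes_def
proof (intro CollectI conjI allI impI)
  fix l assume l: "l < n"
  show "ctx n i s l < m"
  proof (cases "l = i")
    case True then show ?thesis using assms(3) unfolding ctx_def by simp
  next
    case False
    have "del i l < n - 1" using del_lt l False assms(2) by auto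
    then have "s (del i l) \<in> {1..m}" using assms(1) by (auto simp: PiE_iff)
    then show ?thesis unfolding ctx_def using l False by auto
  qed
qed (auto simp: ctx_def)

lemma extend_card:
  assumes "finite B" "A \<subseteq> B" "card A \<le> k" "k \<le> card B"
  obtains C where "A \<subseteq> C" "C \<subseteq> B" "card C = k"
proof -
  have fA0: "finite A" using finite_subset[OF assms(2) assms(1)] .
  have "k - card A \<le> card (B - A)" using card_Diff_subset[OF fA0 assms(2)] assms(4) by simp
  then obtain D where D: "D \<subseteq> B - A" "card D = k - card A"
    by (rule obtain_subset_with_card_n)
  have fA: "finite A" using fA0 .
  have fD: "finite D" using finite_subset[OF D(1)] assms(1) by blast
  have "A \<inter> D = {}" using D by blast
  then have "card (A \<union> D) = card A + card D" using fA fD by (rule card_Un_disjoint[rotated 2])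
  then have "card (A \<union> D) = k" using D assms(3) by simp
  then show ?thesis using that[of "A \<union> D"] D assms(2) by blast
qed

lemma cover:
  assumes U: "universal m (n - 1) k S" and kn: "k \<le> n - 1" and i: "i < n"
    and K: "K \<subseteq> {0..<n} - {i}" "card K \<le> k" and t: "t \<in> outcomes n m"
  shows "\<exists>s\<in>S. \<forall>l\<in>K. ctx n i s l = t l"
proof -
  define K' where "K' = del i ` K"
  have injK: "inj_on (del i) K" using inj_on_subset[OF inj_del] K by blast
  have cK': "card K' = card K" unfolding K'_def using card_image[OF injK] .
  have K'sub: "K' \<subseteq> {0..<n-1}" unfolding K'_def
  proof (rule image_subsetI)
    fix p assume "p \<in> K"
    then have "p < n" "p \<noteq> i" using K by auto
    then show "del i p \<in> {0..<n-1}" using del_lt[OF _ _ i] by simp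
  qed
  obtain K'' where K'': "K' \<subseteq> K''" "K'' \<subseteq> {0..<n-1}" "card K'' = k"
    using extend_card[OF _ K'sub, of k] cK' K(2) kn by auto
  define g where "g = (\<lambda>l\<in>K''. if l \<in> K' then t (ins i l) + 1 else 1)"
  have "g \<in> PiE K'' (\<lambda>_. {1..m})"
  proof -
    have "t (ins i l) < m" if "l \<in> K''" for l
      using out_lt[OF t ins_lt[of l n i]] K'' that i by auto
    moreover have "1 \<le> m" if "l \<in> K''" "l \<notin> K'" for l
    proof -
      have "0 < n" using i by simp
      then have "t 0 < m" using out_lt[OF t] by auto
      then show ?thesis by simp
    qed
    ultimately show ?thesis unfolding g_def by (auto simp: PiE_iff Suc_leI)
  qed
  then have "g \<in> (\<lambda>s. restrict s K'') ` S" using U K'' unfolding universal_def by blast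
  then obtain s where s: "s \<in> S" "restrict s K'' = g" by auto
  have "ctx n i s l = t l" if l: "l \<in> K" for l
  proof -
    have li: "l < n" "l \<noteq> i" using K l by auto
    have "del i l \<in> K'" unfolding K'_def using l by auto
    moreover have "del i l \<in> K''" using K''(1) \<open>del i l \<in> K'\<close> by blast
    moreover have "s (del i l) = restrict s K'' (del i l)" using calculation(2) by simp
    ultimately have "s (del i l) = t (ins i (del i l)) + 1" using s(2) unfolding g_def by simp
    then show ?thesis unfolding ctx_def using li ins_del by auto
  qed
  then show ?thesis using s by blast
qed



definition fsum :: "nat \<Rightarrow> nat \<Rightarrow> nat" where "fsum k N = (\<Sum>p<N. min p k)"

lemma sum_lt_choose: "(\<Sum>p<k. p) = k choose 2"
proof (induction k)
  case 0 then show ?case by simp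
next
  case (Suc k)
  have "(Suc k) choose 2 = (k choose 1) + (k choose 2)"
    by (metis Suc_1 binomial_Suc_Suc)
  then show ?case using Suc by simp
qed

lemma fsum_eq: "k \<le> N \<Longrightarrow> fsum k N = (N - k) * k + (k choose 2)"
proof (induction N rule: dec_induct)
  case base
  have "fsum k k = (\<Sum>p<k. p)" unfolding fsum_def by (rule sum.cong) auto
  then show ?case using sum_lt_choose by simp
next
  case (step N)
  have "fsum k (Suc N) = fsum k N + k" unfolding fsum_def using step(1) by simp
  then show ?case using step by (simp add: Suc_diff_le)
qed

lemma edges_V:
  assumes N: "complete_acyclic_cpnet n m k Pa ord"
  shows "V \<subseteq> {0..<n} \<Longrightarrow> card {(j,i). i \<in> V \<and> j \<in> Pa i \<inter> V} \<le> fsum k (card V)"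
proof (induction "card V" arbitrary: V rule: less_induct)
  case less
  show ?case
  proof (cases "V = {}")
    case True then show ?thesis by simp
  next
    case False
    then obtain v0 where v0: "v0 \<in> V" by auto
    let ?G = "{(j, i). i < n \<and> j \<in> Pa i}"
    have "?G \<subseteq> {0..<n} \<times> {0..<n}" using net_pa[OF N] by auto
    then have "finite (?G\<inverse>)" by (meson finite_SigmaI finite_atLeastLessThan finite_subset finite_converse)
    moreover have "acyclic (?G\<inverse>)" using net_acyc[OF N] by (simp add: acyclic_converse)
    ultimately have "wf (?G\<inverse>)" using wf_iff_acyclic_if_finite by blast
    then obtain i where i: "i \<in> V" "\<forall>y. (y, i) \<in> ?G\<inverse> \<longrightarrow> y \<notin> V"
      using v0 unfolding wf_eq_minimal by (elim allE[of _ V] allE[of _ v0]) blast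
    have iV: "\<And>l. l \<in> V \<Longrightarrow> i \<notin> Pa l" using i less.prems by auto
    have finV: "finite V" using less.prems finite_subset by blast
    have cpos: "card V > 0" using finV i card_gt_0_iff by blast
    have "{(j,l). l \<in> V \<and> j \<in> Pa l \<inter> V} \<subseteq> (\<lambda>j. (j,i)) ` (Pa i \<inter> V) \<union> {(j,l). l \<in> V - {i} \<and> j \<in> Pa l \<inter> (V - {i})}"
      using iV by auto
    then have "card {(j,l). l \<in> V \<and> j \<in> Pa l \<inter> V} \<le> card ((\<lambda>j. (j,i)) ` (Pa i \<inter> V) \<union> {(j,l). l \<in> V - {i} \<and> j \<in> Pa l \<inter> (V - {i})})"
    proof (rule card_mono[rotated])
      have "{(j,l). l \<in> V - {i} \<and> j \<in> Pa l \<inter> (V - {i})} \<subseteq> V \<times> V" by auto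
      then show "finite ((\<lambda>j. (j,i)) ` (Pa i \<inter> V) \<union> {(j,l). l \<in> V - {i} \<and> j \<in> Pa l \<inter> (V - {i})})"
        using finV finite_subset by blast
    qed
    also have "\<dots> \<le> card ((\<lambda>j. (j,i)) ` (Pa i \<inter> V)) + card {(j,l). l \<in> V - {i} \<and> j \<in> Pa l \<inter> (V - {i})}"
      by (rule card_Un_le)
    also have "\<dots> \<le> min (card V - 1) k + fsum k (card (V - {i}))"
    proof (rule add_mono)
      have in_: "i < n" using i less.prems by auto
      have "card ((\<lambda>j. (j,i)) ` (Pa i \<inter> V)) \<le> card (Pa i \<inter> V)" by (rule card_image_le) (use finV in auto)
      moreover have "card (Pa i \<inter> V) \<le> card (Pa i)" by (rule card_mono) (use net_fin[OF N in_] in auto)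
      moreover have "card (Pa i \<inter> V) \<le> card (V - {i})" by (rule card_mono) (use finV net_pa[OF N in_] in auto)
      ultimately show "card ((\<lambda>j. (j,i)) ` (Pa i \<inter> V)) \<le> min (card V - 1) k"
        using net_card[OF N in_] finV i by simp
      show "card {(j,l). l \<in> V - {i} \<and> j \<in> Pa l \<inter> (V - {i})} \<le> fsum k (card (V - {i}))"
        by (rule less.hyps) (use finV i less.prems cpos in \<open>auto intro: card_Diff1_less\<close>)
    qed
    also have "\<dots> = fsum k (card V)"
    proof -
      have cV: "card V = Suc (card (V - {i}))" using finV i cpos by simp
      show ?thesis unfolding fsum_def cV by simp
    qed
    finally show ?thesis .
  qed
qed

lemma edges_count:
  assumes N: "complete_acyclic_cpnet n m k Pa ord" and kn: "k \<le> n"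
  shows "card {(j,i). i < n \<and> j \<in> Pa i} \<le> e_max n k"
proof -
  have pa: "\<And>i j. i < n \<Longrightarrow> j \<in> Pa i \<Longrightarrow> j < n" using net_pa[OF N] by fastforce
  have "{(j,i). i < n \<and> j \<in> Pa i} = {(j,i). i \<in> {0..<n} \<and> j \<in> Pa i \<inter> {0..<n}}"
    using pa by auto
  then have "card {(j,i). i < n \<and> j \<in> Pa i} \<le> fsum k n" using edges_V[OF N, of "{0..<n}"] by simp
  then show ?thesis using fsum_eq[OF kn] unfolding e_max_def by simp
qed



lemma univ_sub: "universal m d k S \<Longrightarrow> S \<subseteq> PiE {0..<d} (\<lambda>_. {1..m})"
  unfolding universal_def by blast

lemma edge_ex:
  assumes X: "swap_space n m X" and m: "0 < m" and kn: "k \<le> n - 1"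
    and N: "complete_acyclic_cpnet n m k Pa ord" and U: "universal m (n - 1) k S"
    and i: "i < n" and j: "j \<in> Pa i"
  shows "\<exists>A. A \<subseteq> (\<lambda>x. (x, cp_concept n m X ord x)) ` X \<and> card A \<le> 1 \<and>
     (\<forall>Pa' ord'. complete_acyclic_cpnet n m k Pa' ord' \<longrightarrow>
        (\<forall>i<n. \<forall>t\<in>ctx n i ` S. ord' i t = ord i t) \<longrightarrow>
        (\<forall>(x,l)\<in>A. cp_concept n m X ord' x = l) \<longrightarrow> j \<in> Pa' i)"
proof -
  obtain w w' where ww: "w \<in> outcomes n m" "w' \<in> outcomes n m" "\<forall>l. l \<noteq> j \<longrightarrow> w l = w' l"
    "ord i w \<noteq> ord i w'" using net_nd[OF N i j] by blast
  obtain s where s: "s \<in> S" "\<forall>l\<in>Pa i. ctx n i s l = w l"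
    using cover[OF U kn i net_pa[OF N i] net_card[OF N i] ww(1)] by blast
  let ?u = "ctx n i s"
  have jn: "j < n" using net_pa[OF N i] j by auto
  have uo: "?u \<in> outcomes n m" using ctx_out[OF _ i m] univ_sub[OF U] s(1) by blast
  let ?u2 = "?u(j := w' j)"
  have u2o: "?u2 \<in> outcomes n m" using out_upd[OF uo jn out_lt[OF ww(2) jn]] .
  have o1: "ord i ?u = ord i w" by (rule net_ctx[OF N i uo ww(1)]) (use s in auto)
  have o2: "ord i ?u2 = ord i w'"
  proof (rule net_ctx[OF N i u2o ww(2)])
    fix l assume l: "l \<in> Pa i"
    show "?u2 l = w' l"
    proof (cases "l = j")
      case True then show ?thesis by simp
    next
      case False then show ?thesis using s(2) l ww(3) by auto
    qed
  qed
  have st: "sto m (ord i ?u)" "sto m (ord i ?u2)" using net_sto[OF N i] uo u2o by auto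
  have "\<not> ord i ?u \<subseteq> ord i ?u2"
  proof
    assume "ord i ?u \<subseteq> ord i ?u2"
    then have "ord i ?u2 = ord i ?u" using sto_eq[OF st] by blast
    then show False using o1 o2 ww(4) by simp
  qed
  then obtain a b where ab: "(a,b) \<in> ord i ?u" "(a,b) \<notin> ord i ?u2" by auto
  have abm: "a < m" "b < m" "a \<noteq> b" using sto_dom[OF st(1) ab(1)] sto_irr[OF st(1)] ab(1) by auto
  let ?A = "Ex X (cp_concept n m X ord) i ?u2 a b"
  have "\<forall>Pa' ord'. complete_acyclic_cpnet n m k Pa' ord' \<longrightarrow>
        (\<forall>i<n. \<forall>t\<in>ctx n i ` S. ord' i t = ord i t) \<longrightarrow>
        (\<forall>(x,l)\<in>?A. cp_concept n m X ord' x = l) \<longrightarrow> j \<in> Pa' i"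
  proof (intro allI impI)
    fix Pa' ord' assume N': "complete_acyclic_cpnet n m k Pa' ord'"
      and agT: "\<forall>i<n. \<forall>t\<in>ctx n i ` S. ord' i t = ord i t"
      and agA: "\<forall>(x,l)\<in>?A. cp_concept n m X ord' x = l"
    have "(a,b) \<notin> ord' i ?u2" using cons_Ex[OF X N N' u2o i abm agA] ab(2) by blast
    moreover have "(a,b) \<in> ord' i ?u" using agT i s(1) ab(1) by auto
    ultimately have ne: "ord' i ?u \<noteq> ord' i ?u2" by auto
    show "j \<in> Pa' i"
    proof (rule ccontr)
      assume "j \<notin> Pa' i"
      then have "ord' i ?u = ord' i ?u2" by (intro net_ctx[OF N' i uo u2o]) auto
      then show False using ne by simp
    qed
  qed
  moreover have "?A \<subseteq> (\<lambda>x. (x, cp_concept n m X ord x)) ` X" by (rule Ex_sub)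
  moreover have "card ?A \<le> 1" using card_Ex[OF X u2o i abm(1,2)] .
  ultimately show ?thesis by blast
qed

lemma upgen:
  assumes X: "swap_space n m X" and m: "0 < m" and kn: "k \<le> n - 1"
    and N: "complete_acyclic_cpnet n m k Pa ord" and U: "universal m (n - 1) k S"
  shows "\<exists>Sm. teaching_set X (C_ac n m k X) (cp_concept n m X ord) Sm \<and>
     card Sm \<le> n * card S * (m - 1) + e_max n k"
proof -
  let ?G = "{(j,i). i < n \<and> j \<in> Pa i}"
  let ?P = "\<lambda>e A. A \<subseteq> (\<lambda>x. (x, cp_concept n m X ord x)) ` X \<and> card A \<le> 1 \<and>
     (\<forall>Pa' ord'. complete_acyclic_cpnet n m k Pa' ord' \<longrightarrow>
        (\<forall>i<n. \<forall>t\<in>ctx n i ` S. ord' i t = ord i t) \<longrightarrow>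
        (\<forall>(x,l)\<in>A. cp_concept n m X ord' x = l) \<longrightarrow> fst e \<in> Pa' (snd e))"
  have "\<forall>e\<in>?G. \<exists>A. ?P e A"
  proof
    fix e assume "e \<in> ?G"
    then obtain j i where e: "e = (j,i)" "i < n" "j \<in> Pa i" by auto
    show "\<exists>A. ?P e A" using edge_ex[OF X m kn N U e(2,3)] e(1) by simp
  qed
  then obtain f where f: "\<forall>e\<in>?G. ?P e (f e)" by (rule bchoice[THEN exE])
  define E where "E = (\<Union>e\<in>?G. f e)"
  have finG: "finite ?G"
  proof -
    have "?G \<subseteq> {0..<n} \<times> {0..<n}" using net_pa[OF N] by fastforce
    then show ?thesis by (meson finite_SigmaI finite_atLeastLessThan finite_subset)
  qed
  have cE: "card E \<le> e_max n k"
  proof -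
    have "card E \<le> (\<Sum>e\<in>?G. card (f e))" unfolding E_def by (rule card_UN_le[OF finG])
    also have "\<dots> \<le> (\<Sum>e\<in>?G. 1)" by (rule sum_mono) (use f in auto)
    also have "\<dots> = card ?G" by simp
    also have "\<dots> \<le> e_max n k" using edges_count[OF N] kn by simp
    finally show ?thesis .
  qed
  have "\<exists>Sm. teaching_set X (C_ac n m k X) (cp_concept n m X ord) Sm \<and>
     card Sm \<le> (\<Sum>i<n. card (ctx n i ` S)) * (m - 1) + card E"
  proof (rule teach[OF X N, of "\<lambda>i. ctx n i ` S" E])
    show "\<And>i. i < n \<Longrightarrow> ctx n i ` S \<subseteq> outcomes n m" using ctx_out[OF _ _ m] univ_sub[OF U] by blast
    show "E \<subseteq> (\<lambda>x. (x, cp_concept n m X ord x)) ` X" unfolding E_def using f by blast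
    fix Pa' ord' assume N': "complete_acyclic_cpnet n m k Pa' ord'"
      and agT: "\<forall>i<n. \<forall>t\<in>ctx n i ` S. ord' i t = ord i t"
      and agE: "\<forall>(x,l)\<in>E. cp_concept n m X ord' x = l"
    show "\<forall>i<n. \<forall>t\<in>outcomes n m. \<exists>t'\<in>ctx n i ` S. \<forall>l\<in>Pa i \<union> Pa' i. t' l = t l"
    proof (intro allI impI ballI)
      fix i t assume i: "i < n" and t: "t \<in> outcomes n m"
      have sub: "Pa i \<subseteq> Pa' i"
      proof
        fix j assume j: "j \<in> Pa i"
        then have eG: "(j,i) \<in> ?G" using i by auto
        have "\<forall>(x,l)\<in>f (j,i). cp_concept n m X ord' x = l" using agE eG unfolding E_def by blast
        then show "j \<in> Pa' i" using f eG N' agT by fastforce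
      qed
      obtain s where s: "s \<in> S" "\<forall>l\<in>Pa' i. ctx n i s l = t l"
        using cover[OF U kn i net_pa[OF N' i] net_card[OF N' i] t] by blast
      then show "\<exists>t'\<in>ctx n i ` S. \<forall>l\<in>Pa i \<union> Pa' i. t' l = t l" using sub by blast
    qed
  qed
  then obtain Sm where Sm: "teaching_set X (C_ac n m k X) (cp_concept n m X ord) Sm"
    "card Sm \<le> (\<Sum>i<n. card (ctx n i ` S)) * (m - 1) + card E" by blast
  have "(\<Sum>i<n. card (ctx n i ` S)) \<le> (\<Sum>i<n. card S)" by (rule sum_mono) (rule card_image_le, use univ_sub[OF U] finite_subset in \<open>blast intro: finite_PiE\<close>)
  then have "(\<Sum>i<n. card (ctx n i ` S)) * (m - 1) \<le> n * card S * (m - 1)" using mult_le_mono1 by fastforce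
  then show ?thesis using Sm cE by (meson add_mono le_trans)
qed



lemma mk_net:
  assumes "\<forall>i<n. Pa i \<subseteq> {0..<n} - {i}" "\<forall>i<n. card (Pa i) \<le> k" "acyclic {(j, i). i < n \<and> j \<in> Pa i}"
    "\<forall>i<n. \<forall>w\<in>outcomes n m. sto m (ord i w)"
    "\<forall>i<n. \<forall>w\<in>outcomes n m. \<forall>w'\<in>outcomes n m. (\<forall>j\<in>Pa i. w j = w' j) \<longrightarrow> ord i w = ord i w'"
    "\<forall>i<n. \<forall>j\<in>Pa i. \<exists>w\<in>outcomes n m. \<exists>w'\<in>outcomes n m. (\<forall>l. l \<noteq> j \<longrightarrow> w l = w' l) \<and> ord i w \<noteq> ord i w'"
  shows "complete_acyclic_cpnet n m k Pa ord"
proof -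
  have h: "\<forall>i<n. \<forall>w\<in>outcomes n m. strict_total_dom m (ord i w)" using assms(4) sto_iff by blast
  show ?thesis unfolding complete_acyclic_cpnet_def
    by (intro conjI) (fact assms(1), fact assms(2), fact assms(3), fact h, fact assms(5), fact assms(6))
qed

lemma inj_id_nat: "inj (id :: nat \<Rightarrow> nat)" by simp

lemma net0: "complete_acyclic_cpnet n m k (\<lambda>_. {}) (\<lambda>_ _. ordf m id)"
proof (rule mk_net)
  show "acyclic {(j, i). i < n \<and> j \<in> {}}" by (simp add: acyclic_def)
  show "\<forall>i<n. \<forall>w\<in>outcomes n m. sto m (ordf m id)" using sto_ordf[OF inj_id_nat] by blast
qed auto

definition tau :: "nat \<Rightarrow> nat \<Rightarrow> nat" where
  "tau a = (\<lambda>p. if p = a then Suc a else if p = Suc a then a else p)"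

lemma inj_tau: "inj (tau a)" unfolding inj_def tau_def by auto

lemma tau_ok: "\<alpha> \<noteq> \<beta> \<Longrightarrow> \<not> ({\<alpha>, \<beta>} = {a, Suc a}) \<Longrightarrow> (tau a \<beta> < tau a \<alpha> \<longleftrightarrow> \<beta> < \<alpha>)"
  unfolding tau_def by (auto simp: doubleton_eq_iff)

definition matchg :: "nat \<Rightarrow> nat set \<Rightarrow> (nat \<Rightarrow> nat) \<Rightarrow> (nat \<Rightarrow> nat) \<Rightarrow> bool" where
  "matchg i K g w \<longleftrightarrow> (\<forall>l\<in>K. w (ins i l) + 1 = g l)"

definition Pa1 :: "nat \<Rightarrow> nat set \<Rightarrow> nat \<Rightarrow> nat set" where
  "Pa1 i K = (\<lambda>_. {})(i := ins i ` K)"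

definition ord1 :: "nat \<Rightarrow> nat \<Rightarrow> nat set \<Rightarrow> (nat \<Rightarrow> nat) \<Rightarrow> nat \<Rightarrow> nat \<Rightarrow> (nat \<Rightarrow> nat) \<Rightarrow> (nat \<times> nat) set" where
  "ord1 m i K g a = (\<lambda>_ _. ordf m id)(i := (\<lambda>w. if matchg i K g w then ordf m (tau a) else ordf m id))"

definition wg :: "nat \<Rightarrow> nat \<Rightarrow> nat set \<Rightarrow> (nat \<Rightarrow> nat) \<Rightarrow> nat \<Rightarrow> nat" where
  "wg n i K g = (\<lambda>p. if p < n \<and> p \<noteq> i \<and> del i p \<in> K then g (del i p) - 1 else 0)"

lemma wg_props:
  assumes i: "i < n" and K: "K \<subseteq> {0..<n-1}" and g: "g \<in> PiE K (\<lambda>_. {1..m})" and m0: "0 < m"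
  shows "wg n i K g \<in> outcomes n m" "matchg i K g (wg n i K g)"
proof -
  show "wg n i K g \<in> outcomes n m" unfolding outcomes_def
  proof (intro CollectI conjI allI impI)
    fix p assume p: "p < n"
    show "wg n i K g p < m"
    proof (cases "p \<noteq> i \<and> del i p \<in> K")
      case True
      then have "g (del i p) \<in> {1..m}" using g by (auto simp: PiE_iff)
      then show ?thesis unfolding wg_def using True p by auto
    next
      case False
      then show ?thesis unfolding wg_def using m0 by auto
    qed
  qed (auto simp: wg_def)
  show "matchg i K g (wg n i K g)" unfolding matchg_def
  proof
    fix l assume l: "l \<in> K"
    have "l < n - 1" using K l by auto
    then have "ins i l < n" using ins_lt i by auto
    moreover have "g l \<in> {1..m}" using g l by (auto simp: PiE_iff)
    ultimately show "wg n i K g (ins i l) + 1 = g l" unfolding wg_def using l ins_ne by auto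
  qed
qed

lemma acyc_star:
  assumes "\<forall>(x,y)\<in>R. y = i \<and> x \<noteq> i"
  shows "acyclic R"
  unfolding acyclic_def
proof (intro allI notI)
  fix x assume "(x,x) \<in> R\<^sup>+"
  then obtain z where z: "(x,z) \<in> R" "(z,x) \<in> R\<^sup>*" by (auto dest: tranclD)
  then have "z = i" "x \<noteq> i" using assms by auto
  then have "z \<noteq> x" by simp
  then obtain v where "(z,v) \<in> R" using z(2) by (auto elim: converse_rtranclE)
  then show False using assms \<open>z = i\<close> by auto
qed

lemma net1:
  assumes m: "2 \<le> m" and i: "i < n" and a: "Suc a < m" and K: "K \<subseteq> {0..<n-1}" "card K = k"
    and g: "g \<in> PiE K (\<lambda>_. {1..m})"
  shows "complete_acyclic_cpnet n m k (Pa1 i K) (ord1 m i K g a)"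
proof (rule mk_net)
  show "\<forall>l<n. Pa1 i K l \<subseteq> {0..<n} - {l}"
  proof (intro allI impI)
    fix l assume "l < n"
    show "Pa1 i K l \<subseteq> {0..<n} - {l}"
    proof (cases "l = i")
      case True
      have "ins i ` K \<subseteq> {0..<n} - {i}" using K ins_lt[OF _ i] ins_ne by fastforce
      then show ?thesis unfolding Pa1_def using True by simp
    next
      case False then show ?thesis unfolding Pa1_def by simp
    qed
  qed
  show "\<forall>l<n. card (Pa1 i K l) \<le> k"
    unfolding Pa1_def using card_image[OF inj_on_subset[OF inj_ins]] K by simp
  show "acyclic {(j, l). l < n \<and> j \<in> Pa1 i K l}"
    by (rule acyc_star[of _ i]) (auto simp: Pa1_def ins_ne split: if_splits)
  show "\<forall>l<n. \<forall>w\<in>outcomes n m. sto m (ord1 m i K g a l w)"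
    unfolding ord1_def using sto_ordf[OF inj_id_nat] sto_ordf[OF inj_tau] by auto
  show "\<forall>l<n. \<forall>w\<in>outcomes n m. \<forall>w'\<in>outcomes n m. (\<forall>j\<in>Pa1 i K l. w j = w' j) \<longrightarrow>
      ord1 m i K g a l w = ord1 m i K g a l w'"
  proof (intro allI impI ballI)
    fix l and w w' :: "nat \<Rightarrow> nat" assume "\<forall>j\<in>Pa1 i K l. w j = w' j"
    then show "ord1 m i K g a l w = ord1 m i K g a l w'"
      unfolding ord1_def Pa1_def matchg_def by (cases "l = i") auto
  qed
  show "\<forall>l<n. \<forall>j\<in>Pa1 i K l. \<exists>w\<in>outcomes n m. \<exists>w'\<in>outcomes n m.
     (\<forall>p. p \<noteq> j \<longrightarrow> w p = w' p) \<and> ord1 m i K g a l w \<noteq> ord1 m i K g a l w'"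
  proof (intro allI impI ballI)
    fix l j assume l: "l < n" and j: "j \<in> Pa1 i K l"
    then have li: "l = i" unfolding Pa1_def by (cases "l = i") auto
    then obtain l0 where l0: "l0 \<in> K" "j = ins i l0" using j unfolding Pa1_def by auto
    have jn: "j < n" using l0 K ins_lt[OF _ i] by auto
    let ?w = "wg n i K g"
    have w: "?w \<in> outcomes n m" "matchg i K g ?w" using wg_props[OF i K(1) g] m by auto
    let ?w' = "?w(j := if ?w j = 0 then 1 else 0)"
    have w': "?w' \<in> outcomes n m" using out_upd[OF w(1) jn] m by auto
    have "\<not> matchg i K g ?w'"
    proof
      assume "matchg i K g ?w'"
      then have "?w' j + 1 = g l0" using l0 unfolding matchg_def by auto
      moreover have "?w j + 1 = g l0" using w(2) l0 unfolding matchg_def by auto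
      ultimately show False by (auto split: if_splits)
    qed
    then have "ord1 m i K g a l ?w' = ordf m id" unfolding ord1_def using li by simp
    moreover have "ord1 m i K g a l ?w = ordf m (tau a)" unfolding ord1_def using li w(2) by simp
    moreover have "(Suc a, a) \<in> ordf m id" "(Suc a, a) \<notin> ordf m (tau a)"
      unfolding ordf_def tau_def using a by auto
    ultimately have "ord1 m i K g a l ?w \<noteq> ord1 m i K g a l ?w'" by auto
    then show "\<exists>w\<in>outcomes n m. \<exists>w'\<in>outcomes n m.
     (\<forall>p. p \<noteq> j \<longrightarrow> w p = w' p) \<and> ord1 m i K g a l w \<noteq> ord1 m i K g a l w'"
      using w(1) w' by (intro bexI[of _ ?w] bexI[of _ ?w']) auto
  qed
qed



lemma swap_dec:
  assumes "is_swap n m x"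
  obtains i where "i < n" "fst x = (snd x)(i := fst x i)" "fst x i \<noteq> snd x i"
    "snd x \<in> outcomes n m" "fst x \<in> outcomes n m"
proof -
  have D: "card {i. i < n \<and> fst x i \<noteq> snd x i} = 1" and o: "fst x \<in> outcomes n m" "snd x \<in> outcomes n m"
    using assms unfolding is_swap_def by auto
  obtain i where i: "{i. i < n \<and> fst x i \<noteq> snd x i} = {i}" using card_1_singletonE[OF D] by blast
  then have i1: "i < n" "fst x i \<noteq> snd x i" by auto
  have "fst x = (snd x)(i := fst x i)"
  proof
    fix l show "fst x l = ((snd x)(i := fst x i)) l"
    proof (cases "l < n")
      case True then show ?thesis using i by (cases "l = i") auto
    next
      case False then show ?thesis using o unfolding outcomes_def by auto
    qed
  qed
  then show ?thesis using that i1 o by blast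
qed

lemma sem_x:
  assumes N: "complete_acyclic_cpnet n m k Pa ord" and i: "i < n"
    and x: "fst x = (snd x)(i := fst x i)" "fst x i \<noteq> snd x i" "snd x \<in> outcomes n m" "fst x \<in> outcomes n m"
  shows "(snd x, fst x) \<in> (improving_flip n m ord)\<^sup>+ \<longleftrightarrow> (fst x i, snd x i) \<in> ord i (snd x)"
proof -
  have "fst x i < m" "snd x i < m" using x(3,4) i out_lt by auto
  moreover have "(snd x)(i := snd x i) = snd x" by simp
  ultimately show ?thesis using sem[OF N x(3) i, of "fst x i" "snd x i"] x(1,2) by simp
qed

lemma teachD:
  assumes "teaching_set X C c S"
  shows "S \<subseteq> X \<times> UNIV" "\<And>x l. (x,l) \<in> S \<Longrightarrow> c x = l"
    "\<And>c'. c' \<in> C \<Longrightarrow> (\<And>x l. (x,l) \<in> S \<Longrightarrow> c' x = l) \<Longrightarrow> c' = c"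
  using assms unfolding teaching_set_def by auto

definition vec :: "nat \<Rightarrow> nat \<Rightarrow> (((nat \<Rightarrow> nat) \<times> (nat \<Rightarrow> nat)) \<times> bool) \<Rightarrow> nat \<Rightarrow> nat" where
  "vec n i e = (\<lambda>l\<in>{0..<n-1}. snd (fst e) (ins i l) + 1)"

definition Eia where
  "Eia n m Sm i a = {e\<in>Sm. \<exists>t\<in>outcomes n m. fst e = (t(i:=a), t(i:=Suc a)) \<or> fst e = (t(i:=Suc a), t(i:=a))}"

lemma lower_univ:
  assumes X: "swap_space n m X" and m: "2 \<le> m" and kn: "k \<le> n - 1"
    and T: "teaching_set X (C_ac n m k X) (cp_concept n m X (\<lambda>_ _. ordf m id)) Sm"
    and i: "i < n" and a: "Suc a < m"
  shows "universal m (n - 1) k (vec n i ` Eia n m Sm i a)"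
  unfolding universal_def
proof (intro conjI allI impI)
  let ?c0 = "cp_concept n m X (\<lambda>_ _. ordf m id)"
  have N0: "complete_acyclic_cpnet n m k (\<lambda>_. {}) (\<lambda>_ _. ordf m id)" by (rule net0)
  have vecP: "vec n i e \<in> PiE {0..<n-1} (\<lambda>_. {1..m})" if e: "e \<in> Eia n m Sm i a" for e
  proof -
    obtain t where t: "t \<in> outcomes n m" "snd (fst e) = t(i:=Suc a) \<or> snd (fst e) = t(i:=a)"
      using e unfolding Eia_def by auto
    have "snd (fst e) (ins i l) < m" if "l < n - 1" for l
      using t out_lt[OF t(1) ins_lt[OF that i]] ins_ne by auto
    then show ?thesis unfolding vec_def by (auto simp: PiE_iff Suc_leI)
  qed
  show "vec n i ` Eia n m Sm i a \<subseteq> PiE {0..<n-1} (\<lambda>_. {1..m})" using vecP by blast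
  fix K assume K: "K \<subseteq> {0..<n-1} \<and> card K = k"
  show "(\<lambda>s. restrict s K) ` vec n i ` Eia n m Sm i a = PiE K (\<lambda>_. {1..m})"
  proof
    show "(\<lambda>s. restrict s K) ` vec n i ` Eia n m Sm i a \<subseteq> PiE K (\<lambda>_. {1..m})"
      using vecP K by (force simp: PiE_iff)
    show "PiE K (\<lambda>_. {1..m}) \<subseteq> (\<lambda>s. restrict s K) ` vec n i ` Eia n m Sm i a"
    proof
      fix g assume g: "g \<in> PiE K (\<lambda>_. {1..m})"
      show "g \<in> (\<lambda>s. restrict s K) ` vec n i ` Eia n m Sm i a"
      proof (rule ccontr)
        assume notin: "g \<notin> (\<lambda>s. restrict s K) ` vec n i ` Eia n m Sm i a"
        have N1: "complete_acyclic_cpnet n m k (Pa1 i K) (ord1 m i K g a)"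
          using net1[OF m i a _ _ g] K by auto
        let ?c' = "cp_concept n m X (ord1 m i K g a)"
        have c'C: "?c' \<in> C_ac n m k X" unfolding C_ac_def using N1 by blast
        have cons: "?c' x = l" if xl: "(x,l) \<in> Sm" for x l
        proof -
          have xX: "x \<in> X" using teachD(1)[OF T] xl by auto
          have l: "l = ?c0 x" using teachD(2)[OF T xl] by simp
          obtain i' where i': "i' < n" "fst x = (snd x)(i' := fst x i')" "fst x i' \<noteq> snd x i'"
            "snd x \<in> outcomes n m" "fst x \<in> outcomes n m"
            using swap_dec[of n m x] X xX unfolding swap_space_def by blast
          let ?t = "snd x" and ?al = "fst x i'" and ?be = "snd x i'"
          have ab: "?al < m" "?be < m" using i' out_lt by auto
          have e0: "?c0 x \<longleftrightarrow> (?al, ?be) \<in> ordf m id"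
            using sem_x[OF N0 i'(1-5)] xX unfolding cp_concept_def by simp
          have e1: "?c' x \<longleftrightarrow> (?al, ?be) \<in> ord1 m i K g a i' ?t"
            using sem_x[OF N1 i'(1-5)] xX unfolding cp_concept_def by simp
          have "(?al, ?be) \<in> ord1 m i K g a i' ?t \<longleftrightarrow> (?al, ?be) \<in> ordf m id"
          proof (cases "i' = i \<and> matchg i K g ?t")
            case False then show ?thesis unfolding ord1_def by auto
          next
            case True
            then have ii: "i' = i" and mt: "matchg i K g ?t" by auto
            have "\<not> ({?al, ?be} = {a, Suc a})"
            proof
              assume pe: "{?al, ?be} = {a, Suc a}"
              have "(x,l) \<in> Eia n m Sm i a"
                unfolding Eia_def
              proof (intro CollectI conjI bexI)
                show "(x,l) \<in> Sm" by (rule xl)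
                show "?t \<in> outcomes n m" using i' by simp
                have fx: "fst x = ?t(i := ?al)" using i'(2) ii by simp
                from pe i'(3) have "(?al = a \<and> ?be = Suc a) \<or> (?al = Suc a \<and> ?be = a)"
                  by (auto simp: doubleton_eq_iff)
                then show "fst (x, l) = (?t(i := a), ?t(i := Suc a)) \<or> fst (x, l) = (?t(i := Suc a), ?t(i := a))"
                proof
                  assume h: "?al = a \<and> ?be = Suc a"
                  have e1: "fst x i' = a" using h by simp
                  have e2: "snd x i = Suc a" using h ii by simp
                  have fx2: "fst x = ?t(i := a)" using fx unfolding e1 .
                  have tt: "?t(i := Suc a) = ?t" using fun_upd_triv[of ?t i] unfolding e2 .
                  have "x = (?t(i := a), ?t(i := Suc a))"
                    by (rule prod_eqI) (simp only: fx2 fst_conv, simp only: tt snd_conv)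
                  then show ?thesis by simp
                next
                  assume h: "?al = Suc a \<and> ?be = a"
                  have e1: "fst x i' = Suc a" using h by simp
                  have e2: "snd x i = a" using h ii by simp
                  have fx2: "fst x = ?t(i := Suc a)" using fx unfolding e1 .
                  have tt: "?t(i := a) = ?t" using fun_upd_triv[of ?t i] unfolding e2 .
                  have "x = (?t(i := Suc a), ?t(i := a))"
                    by (rule prod_eqI) (simp only: fx2 fst_conv, simp only: tt snd_conv)
                  then show ?thesis by simp
                qed
              qed
              moreover have "restrict (vec n i (x,l)) K = g"
              proof
                fix p show "restrict (vec n i (x,l)) K p = g p"
                proof (cases "p \<in> K")
                  case True
                  then have "p < n - 1" using K by auto
                  then show ?thesis using mt True unfolding vec_def matchg_def by auto
                next
                  case False then show ?thesis using g by (auto simp: PiE_iff extensional_def)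
                qed
              qed
              ultimately show False using notin by blast
            qed
            then have "(?al, ?be) \<in> ordf m (tau a) \<longleftrightarrow> (?al, ?be) \<in> ordf m id"
              using tau_ok[OF i'(3)] ab unfolding ordf_def by auto
            then show ?thesis unfolding ord1_def using ii mt by simp
          qed
          then show ?thesis using e0 e1 l by simp
        qed
        have "?c' = ?c0" using teachD(3)[OF T c'C cons] by blast
        moreover have "?c' \<noteq> ?c0"
        proof -
          let ?t0 = "wg n i K g"
          have t0: "?t0 \<in> outcomes n m" "matchg i K g ?t0" using wg_props[OF i _ g] K m by auto
          have o1: "ord1 m i K g a i ?t0 = ordf m (tau a)" unfolding ord1_def using t0 by simp
          have am: "a < m" using a by simp
          have s0: "(?t0(i := a), ?t0(i := Suc a)) \<in> (improving_flip n m (\<lambda>_ _. ordf m id))\<^sup>+ \<longleftrightarrow> (Suc a, a) \<in> ordf m id"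
            using sem[OF N0 t0(1) i a am] by simp
          have s1: "(?t0(i := a), ?t0(i := Suc a)) \<in> (improving_flip n m (ord1 m i K g a))\<^sup>+ \<longleftrightarrow> (Suc a, a) \<in> ordf m (tau a)"
            using sem[OF N1 t0(1) i a am] o1 by simp
          have s2: "(?t0(i := Suc a), ?t0(i := a)) \<in> (improving_flip n m (\<lambda>_ _. ordf m id))\<^sup>+ \<longleftrightarrow> (a, Suc a) \<in> ordf m id"
            using sem[OF N0 t0(1) i am a] by simp
          have s3: "(?t0(i := Suc a), ?t0(i := a)) \<in> (improving_flip n m (ord1 m i K g a))\<^sup>+ \<longleftrightarrow> (a, Suc a) \<in> ordf m (tau a)"
            using sem[OF N1 t0(1) i am a] o1 by simp
          have f: "(Suc a, a) \<in> ordf m id" "(Suc a, a) \<notin> ordf m (tau a)"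
            "(a, Suc a) \<notin> ordf m id" "(a, Suc a) \<in> ordf m (tau a)"
            unfolding ordf_def tau_def using a by auto
          have sw: "is_swap n m (?t0(i := Suc a), ?t0(i := a))" using is_swap_pair[OF t0(1) i a am] by simp
          have "(?t0(i := Suc a), ?t0(i := a)) \<in> X \<or> (?t0(i := a), ?t0(i := Suc a)) \<in> X"
            using sw X unfolding swap_space_def by blast
          then show ?thesis
          proof
            assume p: "(?t0(i := Suc a), ?t0(i := a)) \<in> X"
            have "?c0 (?t0(i := Suc a), ?t0(i := a))" unfolding cp_concept_def using p s0 f by simp
            moreover have "\<not> ?c' (?t0(i := Suc a), ?t0(i := a))" unfolding cp_concept_def using s1 f by simp
            ultimately show ?thesis by metis
          next
            assume p: "(?t0(i := a), ?t0(i := Suc a)) \<in> X"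
            have "\<not> ?c0 (?t0(i := a), ?t0(i := Suc a))" unfolding cp_concept_def using s2 f by simp
            moreover have "?c' (?t0(i := a), ?t0(i := Suc a))" unfolding cp_concept_def using p s3 f by simp
            ultimately show ?thesis by metis
          qed
        qed
        ultimately show False by simp
      qed
    qed
  qed
qed



definition ext :: "nat \<Rightarrow> nat set \<Rightarrow> (nat \<Rightarrow> nat) \<Rightarrow> nat \<Rightarrow> nat" where
  "ext d K g = (\<lambda>l. if l \<in> K then g l else if l < d then 1 else undefined)"

lemma ext_props:
  assumes "K \<subseteq> {0..<d}" "g \<in> PiE K (\<lambda>_. {1..m})" "0 < m"
  shows "ext d K g \<in> PiE {0..<d} (\<lambda>_. {1..m})" "restrict (ext d K g) K = g"
proof -
  show "ext d K g \<in> PiE {0..<d} (\<lambda>_. {1..m})"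
    using assms unfolding ext_def by (auto simp: PiE_iff extensional_def)
  show "restrict (ext d K g) K = g"
    using assms unfolding ext_def by (auto simp: PiE_iff extensional_def fun_eq_iff)
qed

lemma restr_PiE: "s \<in> PiE {0..<d} (\<lambda>_. {1..m}) \<Longrightarrow> K \<subseteq> {0..<d} \<Longrightarrow> restrict s K \<in> PiE K (\<lambda>_. {1..m})"
  by (auto simp: PiE_iff)

lemma univ_set_fin: "finite {card S | S. universal m d k S}"
proof -
  have "{card S | S. universal m d k S} \<subseteq> {..card (PiE {0..<d} (\<lambda>_. {1..m}))}"
  proof
    fix x assume "x \<in> {card S | S. universal m d k S}"
    then obtain S where S: "x = card S" "universal m d k S" by auto
    have "card S \<le> card (PiE {0..<d} (\<lambda>_. {1..m}))"
      by (rule card_mono) (use univ_sub[OF S(2)] in \<open>auto simp: finite_PiE\<close>)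
    then show "x \<in> {..card (PiE {0..<d} (\<lambda>_. {1..m}))}" using S by simp
  qed
  then show ?thesis using finite_subset by blast
qed

lemma univ_full: assumes "0 < m" shows "universal m d k (PiE {0..<d} (\<lambda>_. {1..m}))"
  unfolding universal_def
proof (intro conjI allI impI)
  fix K assume K: "K \<subseteq> {0..<d} \<and> card K = k"
  show "(\<lambda>s. restrict s K) ` PiE {0..<d} (\<lambda>_. {1..m}) = PiE K (\<lambda>_. {1..m})"
  proof
    show "(\<lambda>s. restrict s K) ` PiE {0..<d} (\<lambda>_. {1..m}) \<subseteq> PiE K (\<lambda>_. {1..m})"
      using restr_PiE K by blast
    show "PiE K (\<lambda>_. {1..m}) \<subseteq> (\<lambda>s. restrict s K) ` PiE {0..<d} (\<lambda>_. {1..m})"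
    proof
      fix g assume g: "g \<in> PiE K (\<lambda>_. {1..m})"
      then show "g \<in> (\<lambda>s. restrict s K) ` PiE {0..<d} (\<lambda>_. {1..m})"
        using ext_props[OF _ g assms] K by (metis image_eqI)
    qed
  qed
qed simp

lemma U_le: "universal m (n - 1) k S \<Longrightarrow> U m n k \<le> card S"
  unfolding U_def by (rule Min_le) (use univ_set_fin in auto)

lemma U_obtain:
  assumes "0 < m" obtains S where "universal m (n - 1) k S" "card S = U m n k"
proof -
  have "U m n k \<in> {card S | S. universal m (n - 1) k S}"
    unfolding U_def by (rule Min_in) (use univ_set_fin in simp, use univ_full[OF assms, of "n - 1" k] in blast)
  then show ?thesis using that by auto
qed

lemma U_ge:
  assumes m: "0 < m" and kn: "k \<le> n - 1"
  shows "m ^ k \<le> U m n k"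
proof -
  obtain S where S: "universal m (n - 1) k S" "card S = U m n k" using U_obtain[OF m] by blast
  have K: "{0..<k} \<subseteq> {0..<n-1}" "card {0..<k} = k" using kn by auto
  then have eq: "(\<lambda>s. restrict s {0..<k}) ` S = PiE {0..<k} (\<lambda>_. {1..m})" using S(1) unfolding universal_def by blast
  have finS: "finite S" using univ_sub[OF S(1)] finite_subset by (blast intro: finite_PiE)
  have "m ^ k = card (PiE {0..<k} (\<lambda>_. {1..m}))" by (simp add: card_PiE)
  also have "\<dots> \<le> card S" unfolding eq[symmetric] by (rule card_image_le[OF finS])
  finally show ?thesis using S by simp
qed

lemma U_upper:
  assumes m: "0 < m"
  shows "U m n k \<le> ((n - 1) choose k) * m ^ k"
proof -
  let ?d = "n - 1"
  let ?KK = "{K. K \<subseteq> {0..<?d} \<and> card K = k}"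
  define S0 where "S0 = (\<Union>K\<in>?KK. ext ?d K ` PiE K (\<lambda>_. {1..m}))"
  have "universal m ?d k S0" unfolding universal_def
  proof (intro conjI allI impI)
    have S0sub: "S0 \<subseteq> PiE {0..<?d} (\<lambda>_. {1..m})" unfolding S0_def using ext_props(1)[OF _ _ m] by blast
    show "S0 \<subseteq> PiE {0..<?d} (\<lambda>_. {1..m})" by (rule S0sub)
    fix K assume K: "K \<subseteq> {0..<?d} \<and> card K = k"
    show "(\<lambda>s. restrict s K) ` S0 = PiE K (\<lambda>_. {1..m})"
    proof
      show "(\<lambda>s. restrict s K) ` S0 \<subseteq> PiE K (\<lambda>_. {1..m})"
      proof (rule image_subsetI)
        fix s assume "s \<in> S0"
        then have "s \<in> PiE {0..<?d} (\<lambda>_. {1..m})" using S0sub by blast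
        then show "restrict s K \<in> PiE K (\<lambda>_. {1..m})" using restr_PiE K by blast
      qed
      show "PiE K (\<lambda>_. {1..m}) \<subseteq> (\<lambda>s. restrict s K) ` S0"
      proof
        fix g assume g: "g \<in> PiE K (\<lambda>_. {1..m})"
        have "ext ?d K g \<in> S0" unfolding S0_def using K g by blast
        then show "g \<in> (\<lambda>s. restrict s K) ` S0" using ext_props(2)[OF _ g m] K by (metis image_eqI)
      qed
    qed
  qed
  then have "U m n k \<le> card S0" by (rule U_le)
  also have "card S0 \<le> (\<Sum>K\<in>?KK. card (ext ?d K ` PiE K (\<lambda>_. {1..m})))"
    unfolding S0_def by (rule card_UN_le) simp
  also have "\<dots> \<le> (\<Sum>K\<in>?KK. m ^ k)"
  proof (rule sum_mono)
    fix K assume K: "K \<in> ?KK"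
    have "card (ext ?d K ` PiE K (\<lambda>_. {1..m})) \<le> card (PiE K (\<lambda>_. {1..m}))" by (rule card_image_le) (use K finite_subset in \<open>auto intro: finite_PiE\<close>)
    also have "\<dots> = m ^ k" using K finite_subset[of K "{0..<?d}"] by (simp add: card_PiE)
    finally show "card (ext ?d K ` PiE K (\<lambda>_. {1..m})) \<le> m ^ k" .
  qed
  also have "\<dots> = (?d choose k) * m ^ k" using n_subsets[of "{0..<?d}" k] by simp
  finally show ?thesis .
qed

lemma Eia_char:
  assumes "e \<in> Eia n m Sm i a"
  shows "{l. fst (fst e) l \<noteq> snd (fst e) l} = {i}" "min (fst (fst e) i) (snd (fst e) i) = a"
proof -
  obtain t where "fst e = (t(i:=a), t(i:=Suc a)) \<or> fst e = (t(i:=Suc a), t(i:=a))"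
    using assms unfolding Eia_def by auto
  then show "{l. fst (fst e) l \<noteq> snd (fst e) l} = {i}" "min (fst (fst e) i) (snd (fst e) i) = a"
    by (auto split: if_splits)
qed

lemma lower:
  assumes X: "swap_space n m X" and m: "2 \<le> m" and kn: "k \<le> n - 1"
    and T: "teaching_set X (C_ac n m k X) (cp_concept n m X (\<lambda>_ _. ordf m id)) Sm"
  shows "n * (m - 1) * U m n k \<le> card Sm"
proof -
  let ?I = "{..<n} \<times> {..<m-1}"
  let ?A = "\<lambda>p. Eia n m Sm (fst p) (snd p)"
  have finSm: "finite Sm" using teachD(1)[OF T] fin_X[OF X] finite_subset by (metis finite_SigmaI finite_UNIV)
  have finA: "\<forall>p\<in>?I. finite (?A p)" unfolding Eia_def using finSm by auto
  have disj: "\<forall>p\<in>?I. \<forall>q\<in>?I. p \<noteq> q \<longrightarrow> ?A p \<inter> ?A q = {}"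
  proof (intro ballI impI)
    fix p q assume "p \<in> ?I" "q \<in> ?I" "p \<noteq> q"
    show "?A p \<inter> ?A q = {}"
    proof (rule ccontr)
      assume "?A p \<inter> ?A q \<noteq> {}"
      then obtain e where e: "e \<in> ?A p" "e \<in> ?A q" by auto
      have "{fst p} = {fst q}" using Eia_char(1)[OF e(1)] Eia_char(1)[OF e(2)] by simp
      then have fe: "fst p = fst q" by simp
      have "snd p = snd q" using Eia_char(2)[OF e(1)] Eia_char(2)[OF e(2)] fe by simp
      then have "fst p = fst q" "snd p = snd q" using fe by auto
      then show False using \<open>p \<noteq> q\<close> by (simp add: prod_eq_iff)
    qed
  qed
  have "n * (m - 1) * U m n k = (\<Sum>p\<in>?I. U m n k)" by simp
  also have "\<dots> \<le> (\<Sum>p\<in>?I. card (?A p))"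
  proof (rule sum_mono)
    fix p assume p: "p \<in> ?I"
    then have i: "fst p < n" and a: "Suc (snd p) < m" by auto
    have "U m n k \<le> card (vec n (fst p) ` ?A p)" using U_le lower_univ[OF X m kn T i a] by blast
    also have "\<dots> \<le> card (?A p)" by (rule card_image_le) (use finA p in blast)
    finally show "U m n k \<le> card (?A p)" .
  qed
  also have "\<dots> = card (\<Union>p\<in>?I. ?A p)" by (rule card_UN_disjoint[symmetric]) (use finA disj in auto)
  also have "\<dots> \<le> card Sm" by (rule card_mono[OF finSm]) (auto simp: Eia_def)
  finally show ?thesis .
qed



lemma c0C: "cp_concept n m X (\<lambda>_ _. ordf m id) \<in> C_ac n m k X"
  unfolding C_ac_def using net0 by blast

lemma UB_from:
  assumes X: "swap_space n m X"
    and H: "\<And>Pa ord. complete_acyclic_cpnet n m k Pa ord \<Longrightarrow>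
       \<exists>S. teaching_set X (C_ac n m k X) (cp_concept n m X ord) S \<and> card S \<le> B"
  shows "TD X (C_ac n m k X) \<le> B"
proof (rule TD_upper)
  show "finite X" using fin_X[OF X] .
  then show "finite (C_ac n m k X)" by (rule fin_C)
  show "C_ac n m k X \<noteq> {}" using c0C by blast
  fix c assume "c \<in> C_ac n m k X"
  then obtain Pa ord where "complete_acyclic_cpnet n m k Pa ord" "c = cp_concept n m X ord"
    unfolding C_ac_def by blast
  then show "\<exists>S. teaching_set X (C_ac n m k X) c S \<and> card S \<le> B" using H by blast
qed

lemma LB:
  assumes X: "swap_space n m X" and m: "2 \<le> m" and kn: "k \<le> n - 1"
  shows "n * (m - 1) * U m n k \<le> TD X (C_ac n m k X)"
proof -
  have fX: "finite X" using fin_X[OF X] .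
  show ?thesis
    by (rule TD_lower[OF fX fin_C[OF fX] c0C teach_full[OF X c0C]]) (rule lower[OF X m kn])
qed

lemma emax_le: "k \<le> n \<Longrightarrow> e_max n k \<le> n * k"
proof -
  assume kn: "k \<le> n"
  have "k choose 2 \<le> k * k"
  proof -
    have "k choose 2 = k * (k - 1) div 2" by (rule choose_two)
    also have "\<dots> \<le> k * (k - 1)" by simp
    also have "\<dots> \<le> k * k" by simp
    finally show ?thesis .
  qed
  moreover have "(n - k) * k + k * k = n * k" using kn by (metis add_mult_distrib le_add_diff_inverse2)
  ultimately show ?thesis unfolding e_max_def by linarith
qed

theorem theorem3:
  fixes n m k :: nat and X :: "((nat \<Rightarrow> nat) \<times> (nat \<Rightarrow> nat)) set"
  assumes "n \<ge> 1" and "m \<ge> 2" and "k \<le> n - 1" and "swap_space n m X"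
  shows "n * (m - 1) * m ^ k \<le> n * (m - 1) * U m n k
       \<and> n * (m - 1) * U m n k \<le> TD X (C_ac n m k X)
       \<and> TD X (C_ac n m k X) \<le> e_max n k + n * (m - 1) * U m n k
       \<and> e_max n k + n * (m - 1) * U m n k \<le> n * k + n * (m - 1) * ((n - 1) choose k) * m ^ k
       \<and> TD X (C_ac n m 0 X) = (m - 1) * n
       \<and> (n \<ge> 2 \<longrightarrow> TD X (C_ac n m 1 X) = (m - 1) * m * n)
       \<and> TD X (C_ac n m (n - 1) X) = (m - 1) * n * m ^ (n - 1)"
proof -
  note X = assms(4) and m = assms(2) and kn = assms(3)
  have m0: "0 < m" using m by simp
  have c1: "n * (m - 1) * m ^ k \<le> n * (m - 1) * U m n k"
    using U_ge[OF m0 kn] by simp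
  have c2: "n * (m - 1) * U m n k \<le> TD X (C_ac n m k X)" by (rule LB[OF X m kn])
  have c3: "TD X (C_ac n m k X) \<le> e_max n k + n * (m - 1) * U m n k"
  proof (rule UB_from[OF X])
    fix Pa ord assume N: "complete_acyclic_cpnet n m k Pa ord"
    obtain S where S: "universal m (n - 1) k S" "card S = U m n k" using U_obtain[OF m0] by blast
    obtain Sm where Sm: "teaching_set X (C_ac n m k X) (cp_concept n m X ord) Sm"
      "card Sm \<le> n * card S * (m - 1) + e_max n k" using upgen[OF X m0 kn N S(1)] by blast
    have "n * card S * (m - 1) = n * (m - 1) * U m n k" using S(2) by (simp add: mult.commute mult.left_commute)
    then have "card Sm \<le> e_max n k + n * (m - 1) * U m n k" using Sm(2) by linarith
    then show "\<exists>S. teaching_set X (C_ac n m k X) (cp_concept n m X ord) S \<and>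
      card S \<le> e_max n k + n * (m - 1) * U m n k" using Sm(1) by blast
  qed
  have c4: "e_max n k + n * (m - 1) * U m n k \<le> n * k + n * (m - 1) * ((n - 1) choose k) * m ^ k"
  proof -
    have a: "e_max n k \<le> n * k" using emax_le kn by simp
    have b: "n * (m - 1) * U m n k \<le> n * (m - 1) * (((n - 1) choose k) * m ^ k)"
      by (rule mult_le_mono2[OF U_upper[OF m0]])
    have eq: "n * (m - 1) * (((n - 1) choose k) * m ^ k) = n * (m - 1) * ((n - 1) choose k) * m ^ k"
      by (simp add: mult.assoc)
    have "e_max n k + n * (m - 1) * U m n k \<le> n * k + n * (m - 1) * (((n - 1) choose k) * m ^ k)"
      by (rule add_mono[OF a b])
    then show ?thesis unfolding eq .
  qed
  have c5: "TD X (C_ac n m 0 X) = (m - 1) * n"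
  proof (rule antisym)
    have h: "TD X (C_ac n m 0 X) \<le> n * (m - 1)" by (rule UB_from[OF X]) (rule up0[OF X m0])
    have eq: "(m - 1) * n = n * (m - 1)" by simp
    show "TD X (C_ac n m 0 X) \<le> (m - 1) * n" using h by (simp only: eq)
    have "n * (m - 1) * m ^ 0 \<le> n * (m - 1) * U m n 0" using U_ge[OF m0, of 0 n] by simp
    moreover have "n * (m - 1) * U m n 0 \<le> TD X (C_ac n m 0 X)" by (rule LB[OF X m]) simp
    ultimately have h: "n * (m - 1) * m ^ 0 \<le> TD X (C_ac n m 0 X)" by (rule le_trans)
    have eq: "(m - 1) * n = n * (m - 1) * m ^ 0" by simp
    show "(m - 1) * n \<le> TD X (C_ac n m 0 X)" using h by (simp only: eq)
  qed
  have c6: "n \<ge> 2 \<longrightarrow> TD X (C_ac n m 1 X) = (m - 1) * m * n"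
  proof
    assume n2: "n \<ge> 2"
    then have k1: "1 \<le> n - 1" by simp
    show "TD X (C_ac n m 1 X) = (m - 1) * m * n"
    proof (rule antisym)
      have h: "TD X (C_ac n m 1 X) \<le> n * m * (m - 1)" by (rule UB_from[OF X]) (rule up1[OF X m0])
      have eq: "(m - 1) * m * n = n * m * (m - 1)" by simp
      show "TD X (C_ac n m 1 X) \<le> (m - 1) * m * n" using h by (simp only: eq)
      have "n * (m - 1) * m ^ 1 \<le> n * (m - 1) * U m n 1" using U_ge[OF m0 k1] by simp
      moreover have "n * (m - 1) * U m n 1 \<le> TD X (C_ac n m 1 X)" by (rule LB[OF X m k1])
      ultimately have h: "n * (m - 1) * m ^ 1 \<le> TD X (C_ac n m 1 X)" by (rule le_trans)
      have eq: "(m - 1) * m * n = n * (m - 1) * m ^ 1" by simp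
      show "(m - 1) * m * n \<le> TD X (C_ac n m 1 X)" using h by (simp only: eq)
    qed
  qed
  have c7: "TD X (C_ac n m (n - 1) X) = (m - 1) * n * m ^ (n - 1)"
  proof (rule antisym)
    have h: "TD X (C_ac n m (n - 1) X) \<le> n * m ^ (n - 1) * (m - 1)" by (rule UB_from[OF X]) (rule upfull[OF X])
    have eq: "(m - 1) * n * m ^ (n - 1) = n * m ^ (n - 1) * (m - 1)" by simp
    show "TD X (C_ac n m (n - 1) X) \<le> (m - 1) * n * m ^ (n - 1)" using h by (simp only: eq)
    have "n * (m - 1) * m ^ (n - 1) \<le> n * (m - 1) * U m n (n - 1)" using U_ge[OF m0, of "n - 1" n] by simp
    moreover have "n * (m - 1) * U m n (n - 1) \<le> TD X (C_ac n m (n - 1) X)" by (rule LB[OF X m]) simp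
    ultimately have h: "n * (m - 1) * m ^ (n - 1) \<le> TD X (C_ac n m (n - 1) X)" by (rule le_trans)
    have eq: "(m - 1) * n * m ^ (n - 1) = n * (m - 1) * m ^ (n - 1)" by simp
    show "(m - 1) * n * m ^ (n - 1) \<le> TD X (C_ac n m (n - 1) X)" using h by (simp only: eq)
  qed
  show ?thesis using c1 c2 c3 c4 c5 c6 c7 by blast
qed


end
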